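(* Let $X\subseteq\mathbb{R}^m$, $f:X\to\mathbb{R}^d$ with $a_{i0}\le f_i(x)\le a_{in}$ on $X$, and $\phi:\mathbb{R}^d\to\mathbb{R}$ multilinear, $\phi(s_{1n},\dots,s_{dn})=\sum_{I\in\mathcal{I}}c_I\prod_{i\in I}s_{in}$ with $\mathcal{I}$ a collection of subsets of $[d]$ and $c_I\in\mathbb{R}$. Let $u:X\to\mathbb{R}^{d\times(n+1)}$ be convex with $u_{i0}(x)=a_{i0}$, $u_{in}(x)=f_i(x)$, $u_{ij}(x)\le\min\{f_i(x),a_{ij}\}$ ($j\in[n-1]$), and $W$ a convex set containing $\{(x,f(x))\mid x\in X\}$. Then, identifying $f$ with $s_{\cdot n}=(s_{1n},\dots,s_{dn})$, the set $\{(\mu,w,s,\delta)\mid(\mu,w,s)\text{ satisfies (HQ)},\ (Z(s),\delta)\text{ satisfies (Inc-1)}\}$ is an ideal formulation of $\bigcup_{H\in\mathcal{H}}\operatorname{conv}\bigl(\{(f,\phi(f))\mid f\in H\}\bigr)$, and adding $u(x)\le s$ and $(x,s_{\cdot n})\in W$ yields an MICP relaxation of the graph of $\phi\circ f$.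
   Context: $d,n\ge1$, $[k]=\{1,\dots,k\}$, $E=\{0,\dots,n\}^d$; $a\in\mathbb{R}^{d\times(n+1)}$ with $a_{i0}<\dots<a_{in}$; integers $0=\tau(i,0)<\dots<\tau(i,l_i)=n$; $\mathcal{H}=\{\prod_i[a_{i\tau(i,t_i-1)},a_{i\tau(i,t_i)}]\mid t_i\in[l_i]\}$. $\Delta_i=\{z_i\in\mathbb{R}^{n+1}\mid1=z_{i0}\ge\dots\ge z_{in}\ge0\}$. (Inc-1): $z_i\in\Delta_i$, $\delta_{it}\in\{0,1\}$, $z_{i\tau(i,t)}\ge\delta_{it}\ge z_{i\tau(i,t)+1}$. $Z(s)_{i0}=1$, $Z(s)_{ij}=(s_{ij}-s_{i,j-1})/(a_{ij}-a_{i,j-1})$. $v_{ij}\in\mathbb{R}^{n+1}$ has $k$-th component $a_{i,\min\{k,j\}}$. System (HQ) in $(\mu,w,s)$, $w=(w_p)_{p\in E}$: $\mu=\sum_{I\in\mathcal{I}}c_I\sum_{p\in E}(\prod_{i\in I}a_{ip_i})w_p$, $w\ge0$, $\sum_{p\in E}w_p=1$, $s_i=\sum_{j=0}^nv_{ij}\sum_{p\in E:p_i=j}w_p$ for $i\in[d]$. Ideal formulation: projection onto $(f,\mu)$ equals the target set and every extreme point of the continuous relaxation has binary $\delta$. MICP relaxation of the graph: its projection onto $(x,\mu)$ contains $\{(x,\phi(f(x)))\mid x\in X\}$ and its continuous relaxation is convex. *)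

theory Defs
  imports "HOL-Analysis.Analysis" "HOL-Library.Function_Algebras"
begin

instantiation "fun" :: (type, real_vector) real_vector
begin
definition scaleR_fun :: "real \<Rightarrow> ('a \<Rightarrow> 'b) \<Rightarrow> 'a \<Rightarrow> 'b"
  where "scaleR_fun r f = (\<lambda>x. r *\<^sub>R f x)"
instance
  by standard (auto simp: scaleR_fun_def fun_eq_iff scaleR_add_right scaleR_add_left)
end


text \<open>Indices: i ranges over [d] = {1..d}, j over {0..n}. Vectors indexed by [d] or
  by [d] x {0..n} are encoded as functions that vanish outside the index range.\<close>

definition gridE :: "nat \<Rightarrow> nat \<Rightarrow> (nat \<Rightarrow> nat) set" where
  "gridE d n = {p. (\<forall>i\<in>{1..d}. p i \<le> n) \<and> (\<forall>i. i \<notin> {1..d} \<longrightarrow> p i = 0)}"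

definition mlin :: "nat set set \<Rightarrow> (nat set \<Rightarrow> real) \<Rightarrow> (nat \<Rightarrow> real) \<Rightarrow> real" where
  "mlin II c g = (\<Sum>I\<in>II. c I * (\<Prod>i\<in>I. g i))"

definition boxesH :: "nat \<Rightarrow> (nat \<Rightarrow> nat \<Rightarrow> real) \<Rightarrow> (nat \<Rightarrow> nat \<Rightarrow> nat) \<Rightarrow> (nat \<Rightarrow> nat)
    \<Rightarrow> (nat \<Rightarrow> real) set set" where
  "boxesH d a tau l =
     {{g. (\<forall>i\<in>{1..d}. a i (tau i (t i - 1)) \<le> g i \<and> g i \<le> a i (tau i (t i)))
          \<and> (\<forall>i. i \<notin> {1..d} \<longrightarrow> g i = 0)}
      | t. \<forall>i\<in>{1..d}. t i \<in> {1..l i}}"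

definition target_set :: "nat \<Rightarrow> (nat \<Rightarrow> nat \<Rightarrow> real) \<Rightarrow> (nat \<Rightarrow> nat \<Rightarrow> nat) \<Rightarrow> (nat \<Rightarrow> nat)
    \<Rightarrow> nat set set \<Rightarrow> (nat set \<Rightarrow> real) \<Rightarrow> ((nat \<Rightarrow> real) \<times> real) set" where
  "target_set d a tau l II c =
     (\<Union>H\<in>boxesH d a tau l. convex hull {(g, mlin II c g) | g. g \<in> H})"

definition HQ :: "nat \<Rightarrow> nat \<Rightarrow> (nat \<Rightarrow> nat \<Rightarrow> real) \<Rightarrow> nat set set \<Rightarrow> (nat set \<Rightarrow> real)
    \<Rightarrow> real \<Rightarrow> ((nat \<Rightarrow> nat) \<Rightarrow> real) \<Rightarrow> (nat \<Rightarrow> nat \<Rightarrow> real) \<Rightarrow> bool" where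
  "HQ d n a II c mu w s \<longleftrightarrow>
     mu = (\<Sum>I\<in>II. c I * (\<Sum>p\<in>gridE d n. (\<Prod>i\<in>I. a i (p i)) * w p))
     \<and> (\<forall>p\<in>gridE d n. 0 \<le> w p)
     \<and> (\<Sum>p\<in>gridE d n. w p) = 1
     \<and> (\<forall>i\<in>{1..d}. \<forall>k\<in>{0..n}.
          s i k = (\<Sum>j=0..n. a i (min k j) * (\<Sum>p\<in>{p\<in>gridE d n. p i = j}. w p)))"

definition Zmap :: "(nat \<Rightarrow> nat \<Rightarrow> real) \<Rightarrow> (nat \<Rightarrow> nat \<Rightarrow> real) \<Rightarrow> nat \<Rightarrow> nat \<Rightarrow> real" where
  "Zmap a s i j = (if j = 0 then 1 else (s i j - s i (j - 1)) / (a i j - a i (j - 1)))"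

text \<open>System (Inc-1) in (z, delta); if relaxed, delta in {0,1} is replaced by 0 <= delta <= 1.
  The index t ranges over [l_i - 1] (so that z_{i,tau(i,t)+1} is defined).\<close>
definition Inc1 :: "bool \<Rightarrow> nat \<Rightarrow> nat \<Rightarrow> (nat \<Rightarrow> nat \<Rightarrow> nat) \<Rightarrow> (nat \<Rightarrow> nat)
    \<Rightarrow> (nat \<Rightarrow> nat \<Rightarrow> real) \<Rightarrow> (nat \<Rightarrow> nat \<Rightarrow> real) \<Rightarrow> bool" where
  "Inc1 relaxed d n tau l z delta \<longleftrightarrow>
     (\<forall>i\<in>{1..d}.
        z i 0 = 1 \<and> (\<forall>j\<in>{1..n}. z i j \<le> z i (j - 1)) \<and> 0 \<le> z i n
        \<and> (\<forall>t\<in>{1..l i - 1}.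
             (if relaxed then 0 \<le> delta i t \<and> delta i t \<le> 1 else delta i t \<in> {0, 1})
             \<and> delta i t \<le> z i (tau i t) \<and> z i (tau i t + 1) \<le> delta i t))"

definition var_support :: "nat \<Rightarrow> nat \<Rightarrow> (nat \<Rightarrow> nat)
    \<Rightarrow> ((nat \<Rightarrow> nat) \<Rightarrow> real) \<Rightarrow> (nat \<Rightarrow> nat \<Rightarrow> real) \<Rightarrow> (nat \<Rightarrow> nat \<Rightarrow> real) \<Rightarrow> bool" where
  "var_support d n l w s delta \<longleftrightarrow>
     (\<forall>p. p \<notin> gridE d n \<longrightarrow> w p = 0)
     \<and> (\<forall>i k. \<not> (i \<in> {1..d} \<and> k \<le> n) \<longrightarrow> s i k = 0)
     \<and> (\<forall>i t. \<not> (i \<in> {1..d} \<and> t \<in> {1..l i - 1}) \<longrightarrow> delta i t = 0)"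

definition formulation :: "bool \<Rightarrow> nat \<Rightarrow> nat \<Rightarrow> (nat \<Rightarrow> nat \<Rightarrow> real) \<Rightarrow> (nat \<Rightarrow> nat \<Rightarrow> nat)
    \<Rightarrow> (nat \<Rightarrow> nat) \<Rightarrow> nat set set \<Rightarrow> (nat set \<Rightarrow> real)
    \<Rightarrow> (real \<times> ((nat \<Rightarrow> nat) \<Rightarrow> real) \<times> (nat \<Rightarrow> nat \<Rightarrow> real) \<times> (nat \<Rightarrow> nat \<Rightarrow> real)) set" where
  "formulation relaxed d n a tau l II c =
     {(mu, w, s, delta). HQ d n a II c mu w s \<and> Inc1 relaxed d n tau l (Zmap a s) delta
        \<and> var_support d n l w s delta}"

definition delta_binary :: "nat \<Rightarrow> (nat \<Rightarrow> nat) \<Rightarrow> (nat \<Rightarrow> nat \<Rightarrow> real) \<Rightarrow> bool" where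
  "delta_binary d l delta \<longleftrightarrow> (\<forall>i\<in>{1..d}. \<forall>t\<in>{1..l i - 1}. delta i t \<in> {0, 1})"

text \<open>Ideal formulation: S is the mixed-integer set, Srel its continuous relaxation,
  proj the projection onto the target variables, binary the integrality condition.\<close>
definition ideal_formulation :: "'v set \<Rightarrow> ('v::real_vector) set \<Rightarrow> ('v \<Rightarrow> 'p) \<Rightarrow> ('v \<Rightarrow> bool)
    \<Rightarrow> 'p set \<Rightarrow> bool" where
  "ideal_formulation S Srel proj isbin T \<longleftrightarrow>
     proj ` S = T \<and> (\<forall>v. v extreme_point_of Srel \<longrightarrow> isbin v)"

definition micp_relaxation :: "'v set \<Rightarrow> ('v::real_vector) set \<Rightarrow> ('v \<Rightarrow> 'p) \<Rightarrow> 'p set \<Rightarrow> bool" where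
  "micp_relaxation S Srel proj G \<longleftrightarrow> G \<subseteq> proj ` S \<and> convex Srel"

definition ext_formulation :: "bool \<Rightarrow> nat \<Rightarrow> nat \<Rightarrow> (nat \<Rightarrow> nat \<Rightarrow> real) \<Rightarrow> (nat \<Rightarrow> nat \<Rightarrow> nat)
    \<Rightarrow> (nat \<Rightarrow> nat) \<Rightarrow> nat set set \<Rightarrow> (nat set \<Rightarrow> real) \<Rightarrow> 'x set
    \<Rightarrow> ('x \<Rightarrow> nat \<Rightarrow> nat \<Rightarrow> real) \<Rightarrow> ('x \<times> (nat \<Rightarrow> real)) set
    \<Rightarrow> ('x \<times> real \<times> ((nat \<Rightarrow> nat) \<Rightarrow> real) \<times> (nat \<Rightarrow> nat \<Rightarrow> real) \<times> (nat \<Rightarrow> nat \<Rightarrow> real)) set" where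
  "ext_formulation relaxed d n a tau l II c X u W =
     {(x, mu, w, s, delta). x \<in> X \<and> (mu, w, s, delta) \<in> formulation relaxed d n a tau l II c
        \<and> (\<forall>i\<in>{1..d}. \<forall>j\<in>{0..n}. u x i j \<le> s i j)
        \<and> (x, (\<lambda>i. s i n)) \<in> W}"

end

theory Submission
  imports Defs
begin


lemma smono_bounded:
  fixes f :: "nat \<Rightarrow> 'b::order"
  assumes "\<forall>j<n. f j < f (Suc j)" "i < j" "j \<le> n"
  shows "f i < f j"
  using assms(2,3)
proof (induction j)
  case 0 then show ?case by simp
next
  case (Suc j)
  have "f j < f (Suc j)" using assms(1) Suc.prems by auto
  then show ?case using Suc by (metis less_Suc_eq order.strict_trans Suc_leD)
qed

lemma mono_bounded:
  fixes f :: "nat \<Rightarrow> 'b::order"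
  assumes "\<forall>j<n. f j < f (Suc j)" "i \<le> j" "j \<le> n"
  shows "f i \<le> f j"
  using smono_bounded[OF assms(1) _ assms(3), of i] assms(2)
  by (cases "i = j") auto

lemma mono_bounded_iff:
  fixes f :: "nat \<Rightarrow> 'b::linorder"
  assumes "\<forall>j<n. f j < f (Suc j)" "i \<le> n" "j \<le> n"
  shows "f i \<le> f j \<longleftrightarrow> i \<le> j"
  using smono_bounded[OF assms(1), of j i] mono_bounded[OF assms(1), of i j] assms
  by (metis linorder_not_le)

lemma gridE_finite: "finite (gridE d n)"
proof -
  have "gridE d n \<subseteq> (\<lambda>f i. if i \<in> {1..d} then f i else 0) ` ({1..d} \<rightarrow>\<^sub>E {0..n})"
  proof
    fix p assume p: "p \<in> gridE d n"
    have "p = (\<lambda>i. if i \<in> {1..d} then restrict p {1..d} i else 0)"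
      using p by (auto simp: gridE_def fun_eq_iff)
    moreover have "restrict p {1..d} \<in> {1..d} \<rightarrow>\<^sub>E {0..n}" using p by (auto simp: gridE_def)
    ultimately show "p \<in> (\<lambda>f i. if i \<in> {1..d} then f i else 0) ` ({1..d} \<rightarrow>\<^sub>E {0..n})" by blast
  qed
  then show ?thesis by (rule finite_subset) (auto intro: finite_PiE)
qed

lemma gridE_le: "p \<in> gridE d n \<Longrightarrow> p i \<le> n"
  by (cases "i \<in> {1..d}") (auto simp: gridE_def)

lemma regroup:
  "(\<Sum>j=0..n. (h j::real) * (\<Sum>p\<in>{p\<in>gridE d n. p i = j}. w p)) = (\<Sum>p\<in>gridE d n. h (p i) * w p)"
proof -
  have "(\<Sum>j=0..n. h j * (\<Sum>p\<in>{p\<in>gridE d n. p i = j}. w p))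
      = (\<Sum>j=0..n. (\<Sum>p\<in>{p\<in>gridE d n. p i = j}. h (p i) * w p))"
    unfolding sum_distrib_left by (auto intro!: sum.cong)
  also have "\<dots> = (\<Sum>p\<in>gridE d n. h (p i) * w p)"
    by (rule sum.group) (auto simp: gridE_finite gridE_le)
  finally show ?thesis .
qed

lemma sum_fun_app: "(\<Sum>p\<in>B. h p) x = (\<Sum>p\<in>B. h p x)"
  by (induction B rule: infinite_finite_induct) auto

definition good_w :: "nat \<Rightarrow> nat \<Rightarrow> ((nat \<Rightarrow> nat) \<Rightarrow> real) \<Rightarrow> bool" where
  "good_w d n w \<longleftrightarrow> (\<forall>p. p \<notin> gridE d n \<longrightarrow> w p = 0) \<and> (\<forall>p\<in>gridE d n. 0 \<le> w p)
     \<and> (\<Sum>p\<in>gridE d n. w p) = 1"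

definition sof :: "nat \<Rightarrow> nat \<Rightarrow> (nat \<Rightarrow> nat \<Rightarrow> real) \<Rightarrow> ((nat \<Rightarrow> nat) \<Rightarrow> real) \<Rightarrow> nat \<Rightarrow> nat \<Rightarrow> real" where
  "sof d n a w = (\<lambda>i k. if i \<in> {1..d} \<and> k \<le> n then (\<Sum>p\<in>gridE d n. a i (min k (p i)) * w p) else 0)"

definition muof :: "nat \<Rightarrow> nat \<Rightarrow> (nat \<Rightarrow> nat \<Rightarrow> real) \<Rightarrow> nat set set \<Rightarrow> (nat set \<Rightarrow> real)
   \<Rightarrow> ((nat \<Rightarrow> nat) \<Rightarrow> real) \<Rightarrow> real" where
  "muof d n a II c w = (\<Sum>I\<in>II. c I * (\<Sum>p\<in>gridE d n. (\<Prod>i\<in>I. a i (p i)) * w p))"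

definition dsupp :: "nat \<Rightarrow> (nat \<Rightarrow> nat) \<Rightarrow> (nat \<Rightarrow> nat \<Rightarrow> real) \<Rightarrow> bool" where
  "dsupp d l delta \<longleftrightarrow> (\<forall>i t. \<not> (i \<in> {1..d} \<and> t \<in> {1..l i - 1}) \<longrightarrow> delta i t = 0)"

lemma form_char:
  "(mu, w, s, delta) \<in> formulation r d n a tau l II c \<longleftrightarrow>
     good_w d n w \<and> mu = muof d n a II c w \<and> s = sof d n a w
     \<and> Inc1 r d n tau l (Zmap a s) delta \<and> dsupp d l delta"
proof -
  have "HQ d n a II c mu w s \<and> var_support d n l w s delta \<longleftrightarrow>
     good_w d n w \<and> mu = muof d n a II c w \<and> s = sof d n a w \<and> dsupp d l delta"
  proof
    assume h: "HQ d n a II c mu w s \<and> var_support d n l w s delta"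
    have "s = sof d n a w"
    proof (intro ext)
      fix i k
      show "s i k = sof d n a w i k"
      proof (cases "i \<in> {1..d} \<and> k \<le> n")
        case True
        then have "s i k = (\<Sum>j=0..n. a i (min k j) * (\<Sum>p\<in>{p\<in>gridE d n. p i = j}. w p))"
          using h by (auto simp: HQ_def)
        then show ?thesis using True by (simp add: regroup sof_def)
      next
        case False then show ?thesis using h by (auto simp: var_support_def sof_def)
      qed
    qed
    then show "good_w d n w \<and> mu = muof d n a II c w \<and> s = sof d n a w \<and> dsupp d l delta"
      using h by (auto simp: HQ_def var_support_def good_w_def muof_def dsupp_def)
  next
    assume h: "good_w d n w \<and> mu = muof d n a II c w \<and> s = sof d n a w \<and> dsupp d l delta"
    then show "HQ d n a II c mu w s \<and> var_support d n l w s delta"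
      by (auto simp: HQ_def var_support_def good_w_def muof_def dsupp_def sof_def regroup)
  qed
  then show ?thesis unfolding formulation_def by auto
qed



lemma tail:
  assumes am: "\<forall>j<n. a i j < a i (Suc j)" and i: "i \<in> {1..d}" and k: "1 \<le> k" "k \<le> n"
  shows "Zmap a (sof d n a w) i k = (\<Sum>p\<in>{p\<in>gridE d n. k \<le> p i}. w p)"
proof -
  have pos: "a i (k - 1) < a i k" using am k by (metis Suc_diff_1 diff_less less_one order.strict_trans1 le_less)
  have "sof d n a w i k - sof d n a w i (k - 1)
     = (\<Sum>p\<in>gridE d n. a i (min k (p i)) * w p - a i (min (k - 1) (p i)) * w p)"
    using i k by (simp add: sof_def sum_subtractf)
  also have "\<dots> = (\<Sum>p\<in>gridE d n. if k \<le> p i then (a i k - a i (k - 1)) * w p else 0)"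
  proof (intro sum.cong refl)
    fix p
    show "a i (min k (p i)) * w p - a i (min (k - 1) (p i)) * w p
        = (if k \<le> p i then (a i k - a i (k - 1)) * w p else 0)"
    proof (cases "k \<le> p i")
      case True
      then have "min k (p i) = k" "min (k - 1) (p i) = k - 1" by auto
      then show ?thesis using True by (simp add: algebra_simps)
    next
      case False
      then have "min k (p i) = p i" "min (k - 1) (p i) = p i" by auto
      then show ?thesis using False by simp
    qed
  qed
  also have "\<dots> = (a i k - a i (k - 1)) * (\<Sum>p\<in>{p\<in>gridE d n. k \<le> p i}. w p)"
    unfolding sum.inter_filter[OF gridE_finite, symmetric] sum_distrib_left
    by (auto intro!: sum.cong)
  finally show ?thesis using k pos by (simp add: Zmap_def)
qed

lemma tail_bounds:
  assumes g: "good_w d n w"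
  shows "0 \<le> (\<Sum>p\<in>{p\<in>gridE d n. k \<le> p i}. w p)" "(\<Sum>p\<in>{p\<in>gridE d n. k \<le> p i}. w p) \<le> 1"
proof -
  show "0 \<le> (\<Sum>p\<in>{p\<in>gridE d n. k \<le> p i}. w p)" using g by (auto simp: good_w_def intro: sum_nonneg)
  have "(\<Sum>p\<in>{p\<in>gridE d n. k \<le> p i}. w p) \<le> (\<Sum>p\<in>gridE d n. w p)"
    using g by (intro sum_mono2) (auto simp: good_w_def gridE_finite)
  then show "(\<Sum>p\<in>{p\<in>gridE d n. k \<le> p i}. w p) \<le> 1" using g by (simp add: good_w_def)
qed

lemma Z_bounds:
  assumes am: "\<forall>j<n. a i j < a i (Suc j)" and i: "i \<in> {1..d}" and g: "good_w d n w" and k: "k \<le> n"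
  shows "0 \<le> Zmap a (sof d n a w) i k" "Zmap a (sof d n a w) i k \<le> 1"
proof -
  have "0 \<le> Zmap a (sof d n a w) i k \<and> Zmap a (sof d n a w) i k \<le> 1"
  proof (cases "k = 0")
    case True then show ?thesis by (simp add: Zmap_def)
  next
    case False then show ?thesis using tail[where a=a and i=i and n=n, OF am i, of k w] tail_bounds[OF g] k by simp
  qed
  then show "0 \<le> Zmap a (sof d n a w) i k" "Zmap a (sof d n a w) i k \<le> 1" by auto
qed

lemma Z_mono:
  assumes am: "\<forall>j<n. a i j < a i (Suc j)" and i: "i \<in> {1..d}" and g: "good_w d n w"
    and j: "1 \<le> j" "j \<le> n"
  shows "Zmap a (sof d n a w) i j \<le> Zmap a (sof d n a w) i (j - 1)"
proof (cases "j = 1")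
  case True then show ?thesis using Z_bounds[where a=a and i=i and n=n, OF am i g j(2)] by (simp add: Zmap_def)
next
  case False
  have "(\<Sum>p\<in>{p\<in>gridE d n. j \<le> p i}. w p) \<le> (\<Sum>p\<in>{p\<in>gridE d n. j - 1 \<le> p i}. w p)"
    using g by (intro sum_mono2) (auto simp: good_w_def gridE_finite)
  then show ?thesis using tail[where a=a and i=i and n=n, OF am i, of j w] tail[where a=a and i=i and n=n, OF am i, of "j - 1" w] j False by simp
qed

lemma Inc1_char:
  assumes am: "\<forall>i\<in>{1..d}. \<forall>j<n. a i j < a i (Suc j)" and g: "good_w d n w"
  shows "Inc1 r d n tau l (Zmap a (sof d n a w)) delta \<longleftrightarrow>
    (\<forall>i\<in>{1..d}. \<forall>t\<in>{1..l i - 1}.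
             (if r then 0 \<le> delta i t \<and> delta i t \<le> 1 else delta i t \<in> {0, 1})
             \<and> delta i t \<le> Zmap a (sof d n a w) i (tau i t)
             \<and> Zmap a (sof d n a w) i (tau i t + 1) \<le> delta i t)"
proof -
  have "\<forall>i\<in>{1..d}. Zmap a (sof d n a w) i 0 = 1
     \<and> (\<forall>j\<in>{1..n}. Zmap a (sof d n a w) i j \<le> Zmap a (sof d n a w) i (j - 1))
     \<and> 0 \<le> Zmap a (sof d n a w) i n"
  proof (rule ballI)
    fix i assume i: "i \<in> {1..d}"
    have am': "\<forall>j<n. a i j < a i (Suc j)" using am i by auto
    have "Zmap a (sof d n a w) i 0 = 1" by (simp add: Zmap_def)
    moreover have "\<forall>j\<in>{1..n}. Zmap a (sof d n a w) i j \<le> Zmap a (sof d n a w) i (j - 1)"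
      using Z_mono[where a=a and i=i and n=n, OF am' i g] by auto
    moreover have "0 \<le> Zmap a (sof d n a w) i n" using Z_bounds[where a=a and i=i and n=n, OF am' i g] by auto
    ultimately show "Zmap a (sof d n a w) i 0 = 1
     \<and> (\<forall>j\<in>{1..n}. Zmap a (sof d n a w) i j \<le> Zmap a (sof d n a w) i (j - 1))
     \<and> 0 \<le> Zmap a (sof d n a w) i n" by blast
  qed
  then show ?thesis unfolding Inc1_def by auto
qed

lemma tau_bounds:
  fixes tau :: "nat \<Rightarrow> nat \<Rightarrow> nat"
  assumes tau_0: "\<forall>i\<in>{1..d}. tau i 0 = 0"
    and tau_mono: "\<forall>i\<in>{1..d}. \<forall>t<l i. tau i t < tau i (Suc t)"
    and tau_l: "\<forall>i\<in>{1..d}. tau i (l i) = n"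
    and i: "i \<in> {1..d}"
  shows "t \<in> {1..l i - 1} \<Longrightarrow> 1 \<le> tau i t \<and> tau i t + 1 \<le> n"
    and "t \<le> l i \<Longrightarrow> tau i t \<le> n"
    and "t' < t \<Longrightarrow> t \<le> l i \<Longrightarrow> tau i t' < tau i t"
    and "t' \<le> t \<Longrightarrow> t \<le> l i \<Longrightarrow> tau i t' \<le> tau i t"
proof -
  have sm: "\<forall>j<l i. tau i j < tau i (Suc j)" using tau_mono i by auto
  show "t' < t \<Longrightarrow> t \<le> l i \<Longrightarrow> tau i t' < tau i t" using smono_bounded[where f="tau i", OF sm] by blast
  show "t' \<le> t \<Longrightarrow> t \<le> l i \<Longrightarrow> tau i t' \<le> tau i t" using mono_bounded[where f="tau i", OF sm] by blast
  show "t \<le> l i \<Longrightarrow> tau i t \<le> n" using mono_bounded[where f="tau i", OF sm, of t "l i"] tau_l i by auto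
  assume t: "t \<in> {1..l i - 1}"
  have "tau i 0 < tau i t" "tau i t < tau i (l i)" using smono_bounded[where f="tau i", OF sm] t by auto
  then show "1 \<le> tau i t \<and> tau i t + 1 \<le> n" using tau_0 tau_l i by auto
qed



lemma comb_same [simp]: "(1 - u) *\<^sub>R x + u *\<^sub>R x = (x::'v::real_vector)"
  by (simp add: scaleR_left_distrib[symmetric])

lemma sof_lin: "sof d n a (\<lambda>p. al * w1 p + be * w2 p) = al *\<^sub>R sof d n a w1 + be *\<^sub>R sof d n a w2"
  by (auto simp: fun_eq_iff sof_def scaleR_fun_def sum.distrib sum_distrib_left algebra_simps)

lemma muof_lin: "muof d n a II c (\<lambda>p. al * w1 p + be * w2 p) = al * muof d n a II c w1 + be * muof d n a II c w2"
  by (simp add: muof_def sum.distrib sum_distrib_left algebra_simps)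

lemma Zmap_lin: "al + be = 1 \<Longrightarrow> Zmap a (al *\<^sub>R s1 + be *\<^sub>R s2) i k = al * Zmap a s1 i k + be * Zmap a s2 i k"
  by (simp add: Zmap_def scaleR_fun_def diff_divide_distrib add_divide_distrib algebra_simps)

lemma perturb:
  assumes am: "\<forall>i\<in>{1..d}. \<forall>j<n. a i j < a i (Suc j)"
    and tb: "\<forall>i\<in>{1..d}. \<forall>t\<in>{1..l i - 1}. 1 \<le> tau i t \<and> tau i t + 1 \<le> n"
    and v: "(mu, w, s, delta) \<in> formulation True d n a tau l II c"
    and i: "i \<in> {1..d}" and t: "t \<in> {1..l i - 1}"
    and LU: "Zmap a s i (tau i t + 1) < delta i t" "delta i t < Zmap a s i (tau i t)"
  shows "\<not> (mu, w, s, delta) extreme_point_of formulation True d n a tau l II c"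
proof
  assume ex: "(mu, w, s, delta) extreme_point_of formulation True d n a tau l II c"
  have g: "good_w d n w" and mu: "mu = muof d n a II c w" and s: "s = sof d n a w"
    and inc: "Inc1 True d n tau l (Zmap a s) delta" and ds: "dsupp d l delta"
    using v form_char by blast+
  define L where "L = Zmap a s i (tau i t + 1)"
  define U where "U = Zmap a s i (tau i t)"
  have am': "\<forall>j<n. a i j < a i (Suc j)" using am i by auto
  have tt: "1 \<le> tau i t \<and> tau i t + 1 \<le> n" using tb i t by blast
  have L0: "0 \<le> L" unfolding L_def s using Z_bounds[where a=a and i=i and n=n, OF am' i g, of "tau i t + 1"] tt by auto
  have U1: "U \<le> 1" unfolding U_def s using Z_bounds[where a=a and i=i and n=n, OF am' i g, of "tau i t"] tt by auto
  have LU': "L < delta i t" "delta i t < U" using LU by (auto simp: L_def U_def)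
  define dU where "dU = delta(i := (delta i)(t := U))"
  define dL where "dL = delta(i := (delta i)(t := L))"
  have incs: "\<forall>i\<in>{1..d}. \<forall>t\<in>{1..l i - 1}. (0 \<le> delta i t \<and> delta i t \<le> 1)
             \<and> delta i t \<le> Zmap a (sof d n a w) i (tau i t)
             \<and> Zmap a (sof d n a w) i (tau i t + 1) \<le> delta i t"
    using inc Inc1_char[OF am g] unfolding s by simp
  have "(mu, w, s, dU) \<in> formulation True d n a tau l II c"
    unfolding form_char using g mu s ds i t L0 U1 LU' incs
    by (auto simp: Inc1_char[OF am g] dU_def dsupp_def L_def U_def)
  moreover have "(mu, w, s, dL) \<in> formulation True d n a tau l II c"
    unfolding form_char using g mu s ds i t L0 U1 LU' incs
    by (auto simp: Inc1_char[OF am g] dL_def dsupp_def L_def U_def)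
  moreover have "(mu, w, s, delta) \<in> open_segment (mu, w, s, dL) (mu, w, s, dU)"
  proof -
    define u where "u = (delta i t - L) / (U - L)"
    have u: "0 < u" "u < 1" using LU' by (auto simp: u_def field_simps)
    have ne: "dL \<noteq> dU" using LU' by (auto simp: dL_def dU_def fun_eq_iff)
    have "delta = (1 - u) *\<^sub>R dL + u *\<^sub>R dU"
    proof (intro ext)
      fix i' t'
      show "delta i' t' = ((1 - u) *\<^sub>R dL + u *\<^sub>R dU) i' t'"
      proof (cases "i' = i \<and> t' = t")
        case True
        have nz: "U - L \<noteq> 0" using LU' by auto
        have "u * (U - L) = delta i t - L" using nz by (simp add: u_def)
        moreover have "(1 - u) * L + u * U = L + u * (U - L)" by (simp add: algebra_simps)
        ultimately have "delta i t = (1 - u) * L + u * U" by simp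
        then show ?thesis using True by (simp add: dL_def dU_def scaleR_fun_def)
      next
        case False then show ?thesis
          by (auto simp: dL_def dU_def scaleR_fun_def algebra_simps)
      qed
    qed
    then show ?thesis unfolding in_segment(2) using u ne
      by (auto intro!: exI[of _ u] simp: algebra_simps)
  qed
  ultimately show False using ex unfolding extreme_point_of_def by blast
qed



lemma interp:
  fixes L U th :: real
  assumes "0 \<le> th" "th \<le> 1" "L \<le> U"
  shows "L \<le> L + th * (U - L)" "L + th * (U - L) \<le> U"
proof -
  have "0 \<le> th * (U - L)" using assms by simp
  moreover have "th * (U - L) \<le> U - L" using mult_left_le_one_le[of "U - L" th] assms by simp
  ultimately show "L \<le> L + th * (U - L)" "L + th * (U - L) \<le> U" by auto
qed

lemma split_not_extreme:
  assumes am: "\<forall>i\<in>{1..d}. \<forall>j<n. a i j < a i (Suc j)"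
    and tb: "\<forall>i\<in>{1..d}. \<forall>t\<in>{1..l i - 1}. 1 \<le> tau i t \<and> tau i t + 1 \<le> n"
    and v: "(mu, w, s, delta) \<in> formulation True d n a tau l II c"
    and i: "i \<in> {1..d}" and k: "1 \<le> k" "k \<le> n"
    and q: "0 < Zmap a s i k" "Zmap a s i k < 1"
  shows "\<not> (mu, w, s, delta) extreme_point_of formulation True d n a tau l II c"
proof
  assume ex: "(mu, w, s, delta) extreme_point_of formulation True d n a tau l II c"
  have g: "good_w d n w" and mu: "mu = muof d n a II c w" and s: "s = sof d n a w"
    and inc: "Inc1 True d n tau l (Zmap a s) delta" and ds: "dsupp d l delta"
    using v form_char by blast+
  have am': "\<forall>j<n. a i j < a i (Suc j)" using am i by auto
  define q where "q = Zmap a s i k"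
  have q0: "0 < q" "q < 1" using q by (auto simp: q_def)
  have qt: "q = (\<Sum>p\<in>{p\<in>gridE d n. k \<le> p i}. w p)"
    unfolding q_def s using tail[where a=a and i=i and n=n, OF am' i k] .
  have S1: "(\<Sum>p\<in>gridE d n. if k \<le> p i then w p else 0) = q"
    unfolding qt by (simp add: sum.inter_filter[OF gridE_finite])
  have S2: "(\<Sum>p\<in>gridE d n. if k \<le> p i then 0 else w p) = 1 - q"
  proof -
    have "(\<Sum>p\<in>gridE d n. if k \<le> p i then 0 else w p)
        = (\<Sum>p\<in>gridE d n. w p - (if k \<le> p i then w p else 0))"
      by (intro sum.cong) auto
    also have "\<dots> = 1 - q" using S1 g by (simp add: sum_subtractf good_w_def)
    finally show ?thesis .
  qed
  define w1 where "w1 = (\<lambda>p. (if k \<le> p i then w p else 0) / q)"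
  define w2 where "w2 = (\<lambda>p. (if k \<le> p i then 0 else w p) / (1 - q))"
  have g1: "good_w d n w1"
    using g q0 S1 unfolding good_w_def w1_def by (auto simp: sum_divide_distrib[symmetric])
  have g2: "good_w d n w2"
    using g q0 S2 unfolding good_w_def w2_def by (auto simp: sum_divide_distrib[symmetric])
  have wc: "w = (\<lambda>p. (1 - q) * w2 p + q * w1 p)"
    using q0 by (auto simp: fun_eq_iff w1_def w2_def)
  define Z1 where "Z1 = Zmap a (sof d n a w1)"
  define Z2 where "Z2 = Zmap a (sof d n a w2)"
  have sc: "s = (1 - q) *\<^sub>R sof d n a w2 + q *\<^sub>R sof d n a w1"
    using s wc sof_lin by metis
  have Zc: "\<And>i' k'. Zmap a s i' k' = (1 - q) * Z2 i' k' + q * Z1 i' k'"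
    unfolding sc Z1_def Z2_def by (rule Zmap_lin) simp
  define th where "th = (\<lambda>i' t'. if Zmap a s i' (tau i' t') = Zmap a s i' (tau i' t' + 1) then 0
       else (delta i' t' - Zmap a s i' (tau i' t' + 1)) / (Zmap a s i' (tau i' t') - Zmap a s i' (tau i' t' + 1)))"
  define d1 where "d1 = (\<lambda>i' t'. if i' \<in> {1..d} \<and> t' \<in> {1..l i' - 1}
       then Z1 i' (tau i' t' + 1) + th i' t' * (Z1 i' (tau i' t') - Z1 i' (tau i' t' + 1)) else 0)"
  define d2 where "d2 = (\<lambda>i' t'. if i' \<in> {1..d} \<and> t' \<in> {1..l i' - 1}
       then Z2 i' (tau i' t' + 1) + th i' t' * (Z2 i' (tau i' t') - Z2 i' (tau i' t' + 1)) else 0)"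
  have incs: "\<forall>i\<in>{1..d}. \<forall>t\<in>{1..l i - 1}. (0 \<le> delta i t \<and> delta i t \<le> 1)
             \<and> delta i t \<le> Zmap a s i (tau i t)
             \<and> Zmap a s i (tau i t + 1) \<le> delta i t"
    using inc Inc1_char[OF am g] unfolding s by simp
  have thb: "0 \<le> th i' t' \<and> th i' t' \<le> 1 \<and>
      delta i' t' = Zmap a s i' (tau i' t' + 1) + th i' t' * (Zmap a s i' (tau i' t') - Zmap a s i' (tau i' t' + 1))"
    if it: "i' \<in> {1..d}" "t' \<in> {1..l i' - 1}" for i' t'
  proof -
    define L where "L = Zmap a s i' (tau i' t' + 1)"
    define U where "U = Zmap a s i' (tau i' t')"
    have LU: "L \<le> delta i' t'" "delta i' t' \<le> U" using incs it by (auto simp: L_def U_def)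
    show ?thesis
    proof (cases "U = L")
      case True then show ?thesis using LU by (simp add: th_def L_def U_def)
    next
      case False
      then have "L < U" using LU by auto
      have th_eq: "th i' t' = (delta i' t' - L) / (U - L)" using False by (simp add: th_def L_def U_def)
      have nz: "U - L \<noteq> 0" using False by auto
      have "0 \<le> (delta i' t' - L) / (U - L)" using LU \<open>L < U\<close> by simp
      moreover have "(delta i' t' - L) / (U - L) \<le> 1" using LU \<open>L < U\<close> by simp
      moreover have "delta i' t' = L + (delta i' t' - L) / (U - L) * (U - L)" using nz by simp
      ultimately show ?thesis unfolding L_def[symmetric] U_def[symmetric] th_eq by blast
    qed
  qed
  have Zjb: "0 \<le> Zj i' (tau i' t' + 1) \<and> Zj i' (tau i' t' + 1) \<le> Zj i' (tau i' t') \<and> Zj i' (tau i' t') \<le> 1"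
    if it: "i' \<in> {1..d}" "t' \<in> {1..l i' - 1}" and Zj: "Zj = Zmap a (sof d n a wj)" and gj: "good_w d n wj"
    for i' t' Zj wj
  proof -
    have am'': "\<forall>j<n. a i' j < a i' (Suc j)" using am it by auto
    have tt: "1 \<le> tau i' t' \<and> tau i' t' + 1 \<le> n" using tb it by blast
    show ?thesis unfolding Zj
      using Z_bounds[where a=a and i=i' and n=n, OF am'' it(1) gj, of "tau i' t' + 1"]
        Z_bounds[where a=a and i=i' and n=n, OF am'' it(1) gj, of "tau i' t'"]
        Z_mono[where a=a and i=i' and n=n, OF am'' it(1) gj, of "tau i' t' + 1"] tt
      by auto
  qed
  have in1: "(muof d n a II c w1, w1, sof d n a w1, d1) \<in> formulation True d n a tau l II c"
    unfolding form_char
  proof (intro conjI)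
    show "Inc1 True d n tau l (Zmap a (sof d n a w1)) d1"
      unfolding Inc1_char[OF am g1] unfolding Z1_def[symmetric]
    proof (intro ballI)
      fix i' t' assume it: "i' \<in> {1..d}" "t' \<in> {1..l i' - 1}"
      have "0 \<le> th i' t'" "th i' t' \<le> 1" using thb[OF it] by auto
      moreover have "0 \<le> Z1 i' (tau i' t' + 1)" "Z1 i' (tau i' t' + 1) \<le> Z1 i' (tau i' t')" "Z1 i' (tau i' t') \<le> 1"
        using Zjb[OF it Z1_def g1] by auto
      ultimately show "(if True then 0 \<le> d1 i' t' \<and> d1 i' t' \<le> 1 else d1 i' t' \<in> {0, 1}) \<and>
           d1 i' t' \<le> Z1 i' (tau i' t') \<and> Z1 i' (tau i' t' + 1) \<le> d1 i' t'"
        using interp[of "th i' t'" "Z1 i' (tau i' t' + 1)" "Z1 i' (tau i' t')"] it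
        by (simp add: d1_def)
    qed
  qed (auto simp: g1 dsupp_def d1_def)
  have in2: "(muof d n a II c w2, w2, sof d n a w2, d2) \<in> formulation True d n a tau l II c"
    unfolding form_char
  proof (intro conjI)
    show "Inc1 True d n tau l (Zmap a (sof d n a w2)) d2"
      unfolding Inc1_char[OF am g2] unfolding Z2_def[symmetric]
    proof (intro ballI)
      fix i' t' assume it: "i' \<in> {1..d}" "t' \<in> {1..l i' - 1}"
      have "0 \<le> th i' t'" "th i' t' \<le> 1" using thb[OF it] by auto
      moreover have "0 \<le> Z2 i' (tau i' t' + 1)" "Z2 i' (tau i' t' + 1) \<le> Z2 i' (tau i' t')" "Z2 i' (tau i' t') \<le> 1"
        using Zjb[OF it Z2_def g2] by auto
      ultimately show "(if True then 0 \<le> d2 i' t' \<and> d2 i' t' \<le> 1 else d2 i' t' \<in> {0, 1}) \<and>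
           d2 i' t' \<le> Z2 i' (tau i' t') \<and> Z2 i' (tau i' t' + 1) \<le> d2 i' t'"
        using interp[of "th i' t'" "Z2 i' (tau i' t' + 1)" "Z2 i' (tau i' t')"] it
        by (simp add: d2_def)
    qed
  qed (auto simp: g2 dsupp_def d2_def)
  have dc: "delta = (1 - q) *\<^sub>R d2 + q *\<^sub>R d1"
  proof (intro ext)
    fix i' t'
    show "delta i' t' = ((1 - q) *\<^sub>R d2 + q *\<^sub>R d1) i' t'"
    proof (cases "i' \<in> {1..d} \<and> t' \<in> {1..l i' - 1}")
      case True
      then have "delta i' t' = Zmap a s i' (tau i' t' + 1) + th i' t' * (Zmap a s i' (tau i' t') - Zmap a s i' (tau i' t' + 1))"
        using thb by blast
      then show ?thesis using True by (simp add: scaleR_fun_def d1_def d2_def Zc algebra_simps)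
    next
      case False then show ?thesis using ds by (auto simp: dsupp_def scaleR_fun_def d1_def d2_def)
    qed
  qed
  have wne: "w1 \<noteq> w2"
  proof -
    have "\<exists>p\<in>gridE d n. k \<le> p i \<and> 0 < w p"
    proof (rule ccontr)
      assume "\<not> ?thesis"
      then have "(\<Sum>p\<in>gridE d n. if k \<le> p i then w p else 0) \<le> 0"
        by (intro sum_nonpos) auto
      then show False using S1 q0 by simp
    qed
    then obtain p where "k \<le> p i" "0 < w p" by blast
    then have "w1 p \<noteq> w2 p" using q0 by (simp add: w1_def w2_def)
    then show ?thesis by auto
  qed
  have "(mu, w, s, delta) \<in> open_segment (muof d n a II c w2, w2, sof d n a w2, d2) (muof d n a II c w1, w1, sof d n a w1, d1)"
    unfolding in_segment(2)
  proof (intro conjI exI[of _ q])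
    show "(muof d n a II c w2, w2, sof d n a w2, d2) \<noteq> (muof d n a II c w1, w1, sof d n a w1, d1)"
      using wne by auto
    have "w = (1 - q) *\<^sub>R w2 + q *\<^sub>R w1" using wc by (simp add: fun_eq_iff scaleR_fun_def)
    moreover have "mu = (1 - q) * muof d n a II c w2 + q * muof d n a II c w1"
      using mu wc muof_lin by metis
    ultimately show "(mu, w, s, delta) = (1 - q) *\<^sub>R (muof d n a II c w2, w2, sof d n a w2, d2)
        + q *\<^sub>R (muof d n a II c w1, w1, sof d n a w1, d1)"
      using sc dc by simp
  qed (use q0 in auto)
  then show False using ex in1 in2 unfolding extreme_point_of_def by blast
qed



lemma extreme_binary:
  assumes am: "\<forall>i\<in>{1..d}. \<forall>j<n. a i j < a i (Suc j)"
    and tb: "\<forall>i\<in>{1..d}. \<forall>t\<in>{1..l i - 1}. 1 \<le> tau i t \<and> tau i t + 1 \<le> n"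
    and ex: "v extreme_point_of formulation True d n a tau l II c"
  shows "(\<lambda>(mu, w, s, delta). delta_binary d l delta) v"
proof -
  obtain mu w s delta where v: "v = (mu, w, s, delta)" by (cases v) auto
  have mem: "(mu, w, s, delta) \<in> formulation True d n a tau l II c"
    using ex v by (simp add: extreme_point_of_def)
  have g: "good_w d n w" and s: "s = sof d n a w"
    and inc: "Inc1 True d n tau l (Zmap a s) delta"
    using mem form_char by blast+
  have incs: "\<forall>i\<in>{1..d}. \<forall>t\<in>{1..l i - 1}. (0 \<le> delta i t \<and> delta i t \<le> 1)
             \<and> delta i t \<le> Zmap a s i (tau i t)
             \<and> Zmap a s i (tau i t + 1) \<le> delta i t"
    using inc Inc1_char[OF am g] unfolding s by simp
  have exv: "(mu, w, s, delta) extreme_point_of formulation True d n a tau l II c" using ex v by simp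
  have "delta_binary d l delta"
    unfolding delta_binary_def
  proof (intro ballI)
    fix i t assume i: "i \<in> {1..d}" and t: "t \<in> {1..l i - 1}"
    have tt: "1 \<le> tau i t \<and> tau i t + 1 \<le> n" using tb i t by blast
    show "delta i t \<in> {0, 1}"
    proof (rule ccontr)
      assume nb: "delta i t \<notin> {0, 1}"
      have b: "0 < delta i t" "delta i t < 1" using incs i t nb by force+
      have LU: "Zmap a s i (tau i t + 1) \<le> delta i t" "delta i t \<le> Zmap a s i (tau i t)"
        using incs i t by auto
      show False
      proof (cases "Zmap a s i (tau i t + 1) < delta i t \<and> delta i t < Zmap a s i (tau i t)")
        case True
        then show False using perturb[OF am tb mem i t] exv by blast
      next
        case False
        then have "delta i t = Zmap a s i (tau i t + 1) \<or> delta i t = Zmap a s i (tau i t)"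
          using LU by auto
        then show False
        proof
          assume e: "delta i t = Zmap a s i (tau i t + 1)"
          show False
            using split_not_extreme[OF am tb mem i, of "tau i t + 1"] tt b e exv by auto
        next
          assume e: "delta i t = Zmap a s i (tau i t)"
          show False
            using split_not_extreme[OF am tb mem i, of "tau i t"] tt b e exv by auto
        qed
      qed
    qed
  qed
  then show ?thesis using v by simp
qed



definition apt :: "nat \<Rightarrow> (nat \<Rightarrow> nat \<Rightarrow> real) \<Rightarrow> (nat \<Rightarrow> nat) \<Rightarrow> nat \<Rightarrow> real" where
  "apt d a p = (\<lambda>i. if i \<in> {1..d} then a i (p i) else 0)"

lemma mlin_apt:
  assumes "II \<subseteq> Pow {1..d}"
  shows "mlin II c (apt d a p) = (\<Sum>I\<in>II. c I * (\<Prod>i\<in>I. a i (p i)))"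
  unfolding mlin_def
proof (intro sum.cong refl)
  fix I assume "I \<in> II"
  then have "I \<subseteq> {1..d}" using assms by auto
  then show "c I * prod (apt d a p) I = c I * (\<Prod>i\<in>I. a i (p i))"
    by (auto simp: apt_def intro!: prod.cong)
qed

lemma muof_eq:
  assumes "II \<subseteq> Pow {1..d}"
  shows "muof d n a II c w = (\<Sum>p\<in>gridE d n. w p * mlin II c (apt d a p))"
proof -
  have "muof d n a II c w = (\<Sum>I\<in>II. \<Sum>p\<in>gridE d n. w p * (c I * (\<Prod>i\<in>I. a i (p i))))"
    unfolding muof_def sum_distrib_left by (intro sum.cong refl) (simp add: algebra_simps)
  also have "\<dots> = (\<Sum>p\<in>gridE d n. \<Sum>I\<in>II. w p * (c I * (\<Prod>i\<in>I. a i (p i))))"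
    by (rule sum.swap)
  also have "\<dots> = (\<Sum>p\<in>gridE d n. w p * mlin II c (apt d a p))"
    by (simp add: mlin_apt[OF assms] sum_distrib_left)
  finally show ?thesis .
qed

lemma sof_n: "i \<in> {1..d} \<Longrightarrow> sof d n a w i n = (\<Sum>p\<in>gridE d n. w p * apt d a p i)"
proof -
  assume i: "i \<in> {1..d}"
  have mn: "\<And>p. p \<in> gridE d n \<Longrightarrow> min n (p i) = p i" using gridE_le by (simp add: min_absorb2)
  have "sof d n a w i n = (\<Sum>p\<in>gridE d n. a i (min n (p i)) * w p)" using i by (simp add: sof_def)
  also have "\<dots> = (\<Sum>p\<in>gridE d n. w p * apt d a p i)"
    by (rule sum.cong) (use i mn in \<open>auto simp: apt_def\<close>)
  finally show ?thesis .
qed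

lemma proj_sum:
  assumes "II \<subseteq> Pow {1..d}"
  shows "((\<lambda>i. sof d n a w i n), muof d n a II c w)
       = (\<Sum>p\<in>gridE d n. w p *\<^sub>R (apt d a p, mlin II c (apt d a p)))"
proof (rule prod_eqI)
  show "fst ((\<lambda>i. sof d n a w i n), muof d n a II c w)
      = fst (\<Sum>p\<in>gridE d n. w p *\<^sub>R (apt d a p, mlin II c (apt d a p)))"
  proof (simp add: fst_sum, intro ext)
    fix i
    show "sof d n a w i n = (\<Sum>p\<in>gridE d n. w p *\<^sub>R apt d a p) i"
      unfolding sum_fun_app
    proof (cases "i \<in> {1..d}")
      case True then show "sof d n a w i n = (\<Sum>p\<in>gridE d n. (w p *\<^sub>R apt d a p) i)"
        by (simp add: sof_n scaleR_fun_def)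
    next
      case False
      have "sof d n a w i n = 0" using False unfolding sof_def by auto
      moreover have "\<And>p. apt d a p i = 0" using False unfolding apt_def by auto
      ultimately show "sof d n a w i n = (\<Sum>p\<in>gridE d n. (w p *\<^sub>R apt d a p) i)"
        by (simp add: scaleR_fun_def)
    qed
  qed
  show "snd ((\<lambda>i. sof d n a w i n), muof d n a II c w)
      = snd (\<Sum>p\<in>gridE d n. w p *\<^sub>R (apt d a p, mlin II c (apt d a p)))"
    by (simp add: snd_sum muof_eq[OF assms])
qed

lemma in_hull_support:
  assumes g: "good_w d n w" and C: "convex C" and h: "\<forall>p\<in>gridE d n. w p \<noteq> 0 \<longrightarrow> h p \<in> C"
  shows "(\<Sum>p\<in>gridE d n. w p *\<^sub>R h p) \<in> C"
proof -
  let ?S = "{p\<in>gridE d n. w p \<noteq> 0}"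
  have "(\<Sum>p\<in>gridE d n. w p *\<^sub>R h p) = (\<Sum>p\<in>?S. w p *\<^sub>R h p)"
    by (rule sum.mono_neutral_right) (auto simp: gridE_finite)
  moreover have "(\<Sum>p\<in>?S. w p) = 1"
  proof -
    have "(\<Sum>p\<in>gridE d n. w p) = (\<Sum>p\<in>?S. w p)"
      by (rule sum.mono_neutral_right) (auto simp: gridE_finite)
    then show ?thesis using g by (simp add: good_w_def)
  qed
  moreover have "(\<Sum>p\<in>?S. w p *\<^sub>R h p) \<in> C"
    by (rule convex_sum) (use g h C calculation(2) in \<open>auto simp: gridE_finite good_w_def\<close>)
  ultimately show ?thesis by simp
qed

lemma tail_one:
  assumes g: "good_w d n w" and t: "1 \<le> (\<Sum>p\<in>{p\<in>gridE d n. k \<le> p i}. w p)"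
    and p: "p \<in> gridE d n" "w p \<noteq> 0"
  shows "k \<le> p i"
proof (rule ccontr)
  assume nk: "\<not> k \<le> p i"
  let ?f = "\<lambda>q. if k \<le> q i then 0 else w q"
  have sp: "(\<Sum>q\<in>gridE d n. w q) = (\<Sum>q\<in>gridE d n. if k \<le> q i then w q else 0) + sum ?f (gridE d n)"
    unfolding sum.distrib[symmetric] by (intro sum.cong) auto
  have "(\<Sum>q\<in>gridE d n. if k \<le> q i then w q else 0) = (\<Sum>p\<in>{p\<in>gridE d n. k \<le> p i}. w p)"
    by (simp add: sum.inter_filter[OF gridE_finite])
  then have le: "sum ?f (gridE d n) \<le> 0"
    using g t sp by (simp add: good_w_def)
  have nn: "\<And>q. q \<in> gridE d n \<Longrightarrow> 0 \<le> ?f q" using g by (simp add: good_w_def)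
  have "0 \<le> sum ?f (gridE d n)" by (rule sum_nonneg) (rule nn)
  then have "sum ?f (gridE d n) = 0" using le by linarith
  then have "\<forall>q\<in>gridE d n. ?f q = 0" using sum_nonneg_eq_0_iff[where f="?f" and A="gridE d n"] gridE_finite nn by blast
  then show False using p nk by force
qed

lemma tail_zero:
  assumes g: "good_w d n w" and t: "(\<Sum>p\<in>{p\<in>gridE d n. k \<le> p i}. w p) \<le> 0"
    and p: "p \<in> gridE d n" "w p \<noteq> 0"
  shows "p i < k"
proof (rule ccontr)
  assume nk: "\<not> p i < k"
  let ?A = "{p\<in>gridE d n. k \<le> p i}"
  have fin: "finite ?A" using gridE_finite by simp
  have nn: "\<And>q. q \<in> ?A \<Longrightarrow> 0 \<le> w q" using g by (simp add: good_w_def)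
  have "0 \<le> sum w ?A" by (rule sum_nonneg) (rule nn)
  then have "sum w ?A = 0" using t by linarith
  then have "\<forall>q\<in>?A. w q = 0" using sum_nonneg_eq_0_iff[where f=w and A="?A"] fin nn by blast
  then show False using p nk by force
qed



lemma proj_subset:
  fixes tau :: "nat \<Rightarrow> nat \<Rightarrow> nat"
  assumes n1: "1 \<le> n"
    and am: "\<forall>i\<in>{1..d}. \<forall>j<n. a i j < a i (Suc j)"
    and tau_0: "\<forall>i\<in>{1..d}. tau i 0 = 0"
    and tau_mono: "\<forall>i\<in>{1..d}. \<forall>t<l i. tau i t < tau i (Suc t)"
    and tau_l: "\<forall>i\<in>{1..d}. tau i (l i) = n"
    and II_sub: "II \<subseteq> Pow {1..d}"
    and v: "(mu, w, s, delta) \<in> formulation False d n a tau l II c"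
  shows "((\<lambda>i. s i n), mu) \<in> target_set d a tau l II c"
proof -
  have g: "good_w d n w" and mu: "mu = muof d n a II c w" and s: "s = sof d n a w"
    and inc: "Inc1 False d n tau l (Zmap a s) delta"
    using v form_char by blast+
  have incs: "\<forall>i\<in>{1..d}. \<forall>t\<in>{1..l i - 1}. delta i t \<in> {0, 1}
             \<and> delta i t \<le> Zmap a (sof d n a w) i (tau i t)
             \<and> Zmap a (sof d n a w) i (tau i t + 1) \<le> delta i t"
    using inc Inc1_char[OF am g] unfolding s by simp
  note tb = tau_bounds[OF tau_0 tau_mono tau_l]
  have l1: "1 \<le> l i" if i: "i \<in> {1..d}" for i
  proof (rule ccontr)
    assume "\<not> 1 \<le> l i"
    then have "l i = 0" by simp
    then show False using tau_0 tau_l i n1 by force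
  qed
  define P where "P = (\<lambda>i t. 1 \<le> t \<and> t \<le> l i \<and> (t = l i \<or> delta i t = 0))"
  define T where "T = (\<lambda>i. LEAST t. P i t)"
  have TP: "P i (T i)" if i: "i \<in> {1..d}" for i
    unfolding T_def by (rule LeastI[of _ "l i"]) (use l1[OF i] in \<open>simp add: P_def\<close>)
  have Tlt: "delta i t = 1" if i: "i \<in> {1..d}" and t: "1 \<le> t" "t < T i" for i t
  proof -
    have "\<not> P i t" using not_less_Least[of t "P i"] t unfolding T_def by blast
    moreover have "T i \<le> l i" using TP[OF i] by (simp add: P_def)
    ultimately have "delta i t \<noteq> 0" "t \<in> {1..l i - 1}" using t by (auto simp: P_def)
    moreover have "delta i t \<in> {0, 1}" using incs i \<open>t \<in> {1..l i - 1}\<close> by blast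
    ultimately show ?thesis by auto
  qed
  define H where "H = {g. (\<forall>i\<in>{1..d}. a i (tau i (T i - 1)) \<le> g i \<and> g i \<le> a i (tau i (T i)))
                        \<and> (\<forall>i. i \<notin> {1..d} \<longrightarrow> g i = 0)}"
  have Hb: "H \<in> boxesH d a tau l"
    unfolding boxesH_def H_def using TP by (auto simp: P_def)
  have supp: "apt d a p \<in> H" if p: "p \<in> gridE d n" "w p \<noteq> 0" for p
  proof -
    have "a i (tau i (T i - 1)) \<le> a i (p i) \<and> a i (p i) \<le> a i (tau i (T i))" if i: "i \<in> {1..d}" for i
    proof -
      have am': "\<forall>j<n. a i j < a i (Suc j)" using am i by auto
      have Ti: "1 \<le> T i" "T i \<le> l i" using TP[OF i] by (auto simp: P_def)
      have pn: "p i \<le> n" using gridE_le[OF p(1)] .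
      have lo: "tau i (T i - 1) \<le> p i"
      proof (cases "T i = 1")
        case True then show ?thesis using tau_0 i by simp
      next
        case False
        define t where "t = T i - 1"
        have t: "1 \<le> t" "t < T i" using Ti False by (auto simp: t_def)
        have d1: "delta i t = 1" using Tlt[OF i t] .
        have tin: "t \<in> {1..l i - 1}" using t Ti by auto
        have tt: "1 \<le> tau i t \<and> tau i t + 1 \<le> n" using tb(1)[OF i tin] .
        have "1 \<le> Zmap a (sof d n a w) i (tau i t)" using incs i tin d1 by force
        then have "1 \<le> (\<Sum>p\<in>{p\<in>gridE d n. tau i t \<le> p i}. w p)"
          using tail[where a=a and i=i and n=n, OF am' i, of "tau i t" w] tt by simp
        then show ?thesis using tail_one[OF g _ p] by (simp add: t_def)
      qed
      have hi: "p i \<le> tau i (T i)"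
      proof (cases "T i = l i")
        case True then show ?thesis using tau_l i pn by simp
      next
        case False
        then have d0: "delta i (T i) = 0" using TP[OF i] by (simp add: P_def)
        have tin: "T i \<in> {1..l i - 1}" using Ti False by auto
        have tt: "1 \<le> tau i (T i) \<and> tau i (T i) + 1 \<le> n" using tb(1)[OF i tin] .
        have "Zmap a (sof d n a w) i (tau i (T i) + 1) \<le> 0" using incs i tin d0 by force
        then have "(\<Sum>p\<in>{p\<in>gridE d n. tau i (T i) + 1 \<le> p i}. w p) \<le> 0"
          using tail[where a=a and i=i and n=n, OF am' i, of "tau i (T i) + 1" w] tt by simp
        then show ?thesis using tail_zero[OF g _ p] by fastforce
      qed
      have "tau i (T i) \<le> n" using tb(2)[OF i Ti(2)] .
      moreover have "tau i (T i - 1) \<le> n" using tb(2)[OF i, of "T i - 1"] Ti by simp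
      ultimately show ?thesis
        using mono_bounded[where f="a i", OF am' lo pn] mono_bounded[where f="a i", OF am' hi] by auto
    qed
    then show ?thesis unfolding H_def apt_def by auto
  qed
  have "((\<lambda>i. s i n), mu) = (\<Sum>p\<in>gridE d n. w p *\<^sub>R (apt d a p, mlin II c (apt d a p)))"
    using proj_sum[OF II_sub, of n a w c] s mu by simp
  also have "\<dots> \<in> convex hull {(g, mlin II c g) | g. g \<in> H}"
    by (rule in_hull_support[OF g]) (auto intro!: hull_inc supp)
  finally show ?thesis unfolding target_set_def using Hb by blast
qed



lemma prod_upd:
  assumes "finite I"
  shows "prod (g(i := x)) I = (if i \<in> I then x * prod g (I - {i}) else prod g I)"
proof (cases "i \<in> I")
  case True
  have "prod (g(i := x)) I = (g(i := x)) i * prod (g(i := x)) (I - {i})"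
    using prod.remove[OF assms True, of "g(i := x)"] by simp
  also have "prod (g(i := x)) (I - {i}) = prod g (I - {i})" by (intro prod.cong) auto
  finally show ?thesis using True by simp
next
  case False
  then show ?thesis by (auto intro!: prod.cong)
qed

lemma mlin_affine:
  assumes II: "II \<subseteq> Pow {1..d}" and gi: "g i = (1 - th) * x + th * y"
  shows "mlin II c g = (1 - th) * mlin II c (g(i := x)) + th * mlin II c (g(i := y))"
  unfolding mlin_def sum_distrib_left sum.distrib[symmetric]
proof (intro sum.cong refl)
  fix I assume "I \<in> II"
  then have fI: "finite I" using II by (auto intro: finite_subset)
  have gg: "g = g(i := g i)" by simp
  show "c I * prod g I = (1 - th) * (c I * prod (g(i := x)) I) + th * (c I * prod (g(i := y)) I)"
  proof (cases "i \<in> I")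
    case True
    have "prod g I = g i * prod g (I - {i})" using prod.remove[OF fI True, of g] .
    moreover have "prod (g(i := x)) I = x * prod g (I - {i})" "prod (g(i := y)) I = y * prod g (I - {i})"
      by (simp only: prod_upd[OF fI] True if_True)+
    ultimately show ?thesis by (simp only: gi) (simp add: algebra_simps)
  next
    case False
    then have "prod (g(i := x)) I = prod g I" "prod (g(i := y)) I = prod g I"
      by (simp only: prod_upd[OF fI] if_False)+
    then show ?thesis by (simp add: algebra_simps)
  qed
qed

lemma apt_inj:
  assumes am: "\<forall>i\<in>{1..d}. \<forall>j<n. a i j < a i (Suc j)"
  shows "inj_on (apt d a) (gridE d n)"
proof (rule inj_onI)
  fix p q assume p: "p \<in> gridE d n" and q: "q \<in> gridE d n" and e: "apt d a p = apt d a q"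
  show "p = q"
  proof (rule ext)
    fix i show "p i = q i"
    proof (cases "i \<in> {1..d}")
      case True
      have am': "\<forall>j<n. a i j < a i (Suc j)" using am True by auto
      have "a i (p i) = a i (q i)" using e True by (metis apt_def)
      moreover have "a i (p i) \<le> a i (q i) \<longleftrightarrow> p i \<le> q i"
        by (rule mono_bounded_iff[where f="a i", OF am' gridE_le[OF p, of i] gridE_le[OF q, of i]])
      moreover have "a i (q i) \<le> a i (p i) \<longleftrightarrow> q i \<le> p i"
        by (rule mono_bounded_iff[where f="a i", OF am' gridE_le[OF q, of i] gridE_le[OF p, of i]])
      ultimately show ?thesis by auto
    next
      case False then show ?thesis using p q by (simp add: gridE_def)
    qed
  qed
qed

lemma hull_rep:
  assumes fB: "finite B" and inj: "inj_on h B" and y: "y \<in> convex hull (h ` B)"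
  shows "\<exists>w. (\<forall>p\<in>B. 0 \<le> w p) \<and> sum w B = 1 \<and> y = (\<Sum>p\<in>B. w p *\<^sub>R h p)"
proof -
  from y obtain u where u: "\<forall>x\<in>h ` B. 0 \<le> u x" "sum u (h ` B) = 1" "(\<Sum>x\<in>h ` B. u x *\<^sub>R x) = y"
    unfolding convex_hull_finite[OF finite_imageI[OF fB]] by blast
  show ?thesis
  proof (intro exI[of _ "u \<circ> h"] conjI)
    show "\<forall>p\<in>B. 0 \<le> (u \<circ> h) p" using u(1) by auto
    show "sum (u \<circ> h) B = 1" using u(2) sum.reindex[OF inj, of u] by simp
    show "y = (\<Sum>p\<in>B. (u \<circ> h) p *\<^sub>R h p)" using u(3) sum.reindex[OF inj, of "\<lambda>x. u x *\<^sub>R x"] by simp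
  qed
qed

lemma vertex_hull:
  fixes lo hi :: "nat \<Rightarrow> nat"
  assumes am: "\<forall>i\<in>{1..d}. \<forall>j<n. a i j < a i (Suc j)"
    and lh: "\<forall>i\<in>{1..d}. lo i < hi i \<and> hi i \<le> n"
    and II: "II \<subseteq> Pow {1..d}"
    and g: "g \<in> {g. (\<forall>i\<in>{1..d}. a i (lo i) \<le> g i \<and> g i \<le> a i (hi i)) \<and> (\<forall>i. i \<notin> {1..d} \<longrightarrow> g i = 0)}"
  shows "(g, mlin II c g) \<in> convex hull ((\<lambda>p. (apt d a p, mlin II c (apt d a p)))
             ` {p\<in>gridE d n. \<forall>i\<in>{1..d}. p i = lo i \<or> p i = hi i})"
proof -
  define Box where "Box = {g. (\<forall>i\<in>{1..d}. a i (lo i) \<le> g i \<and> g i \<le> a i (hi i)) \<and> (\<forall>i. i \<notin> {1..d} \<longrightarrow> g i = 0)}"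
  define V where "V = (\<lambda>p. (apt d a p, mlin II c (apt d a p))) ` {p\<in>gridE d n. \<forall>i\<in>{1..d}. p i = lo i \<or> p i = hi i}"
  have alh: "a i (lo i) < a i (hi i)" if i: "i \<in> {1..d}" for i
  proof -
    have am': "\<forall>j<n. a i j < a i (Suc j)" using am i by auto
    show ?thesis using smono_bounded[where f="a i", OF am'] lh i by auto
  qed
  have main: "\<forall>g\<in>Box. (\<forall>i\<in>{1..d} - K. g i = a i (lo i) \<or> g i = a i (hi i)) \<longrightarrow> (g, mlin II c g) \<in> convex hull V"
    if fK: "finite K" for K
    using fK
  proof (induction K rule: finite_induct)
    case empty
    show ?case
    proof (intro ballI impI)
      fix g assume gB: "g \<in> Box" and gv: "\<forall>i\<in>{1..d} - {}. g i = a i (lo i) \<or> g i = a i (hi i)"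
      define p where "p = (\<lambda>i. if i \<in> {1..d} then (if g i = a i (lo i) then lo i else hi i) else 0)"
      have pB: "p \<in> {p\<in>gridE d n. \<forall>i\<in>{1..d}. p i = lo i \<or> p i = hi i}"
        using lh by (auto simp: p_def gridE_def less_imp_le_nat intro: order.trans)
      have "apt d a p = g"
      proof (rule ext)
        fix i show "apt d a p i = g i"
          using gv gB by (cases "i \<in> {1..d}") (auto simp: apt_def p_def Box_def)
      qed
      then have "(g, mlin II c g) \<in> V" unfolding V_def using pB by force
      then show "(g, mlin II c g) \<in> convex hull V" by (rule hull_inc)
    qed
  next
    case (insert i K)
    show ?case
    proof (intro ballI impI)
      fix g assume gB: "g \<in> Box" and gv: "\<forall>j\<in>{1..d} - insert i K. g j = a j (lo j) \<or> g j = a j (hi j)"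
      show "(g, mlin II c g) \<in> convex hull V"
      proof (cases "i \<in> {1..d}")
        case False
        then have "\<forall>j\<in>{1..d} - K. g j = a j (lo j) \<or> g j = a j (hi j)" using gv by auto
        then show ?thesis using insert.IH gB by blast
      next
        case True
        define x where "x = a i (lo i)"
        define y where "y = a i (hi i)"
        have xy: "x < y" using alh[OF True] by (simp add: x_def y_def)
        have gi: "x \<le> g i" "g i \<le> y" using gB True by (auto simp: Box_def x_def y_def)
        define th where "th = (g i - x) / (y - x)"
        have th: "0 \<le> th" "th \<le> 1" using xy gi by (auto simp: th_def)
        have gi_eq: "g i = (1 - th) * x + th * y"
        proof -
          have "th * (y - x) = g i - x" using xy by (simp add: th_def)
          then show ?thesis by (simp add: algebra_simps)
        qed
        have g1: "g(i := x) \<in> Box" "g(i := y) \<in> Box"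
          using gB True xy by (auto simp: Box_def x_def y_def)
        have "\<forall>j\<in>{1..d} - K. (g(i := x)) j = a j (lo j) \<or> (g(i := x)) j = a j (hi j)"
          using gv by (auto simp: x_def)
        then have h1: "(g(i := x), mlin II c (g(i := x))) \<in> convex hull V" using insert.IH g1 by blast
        have "\<forall>j\<in>{1..d} - K. (g(i := y)) j = a j (lo j) \<or> (g(i := y)) j = a j (hi j)"
          using gv by (auto simp: y_def)
        then have h2: "(g(i := y), mlin II c (g(i := y))) \<in> convex hull V" using insert.IH g1 by blast
        have "(1 - th) *\<^sub>R (g(i := x), mlin II c (g(i := x))) + th *\<^sub>R (g(i := y), mlin II c (g(i := y)))
              \<in> convex hull V"
          by (rule convexD[OF convex_convex_hull h1 h2]) (use th in auto)
        moreover have "(1 - th) *\<^sub>R g(i := x) + th *\<^sub>R g(i := y) = g"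
        proof (rule ext)
          fix j show "((1 - th) *\<^sub>R g(i := x) + th *\<^sub>R g(i := y)) j = g j"
            using gi_eq by (cases "j = i") (auto simp: scaleR_fun_def algebra_simps)
        qed
        moreover have "mlin II c g = (1 - th) * mlin II c (g(i := x)) + th * mlin II c (g(i := y))"
          by (rule mlin_affine[where g=g and i=i, OF II gi_eq])
        ultimately show ?thesis by simp
      qed
    qed
  qed
  show ?thesis using main[of "{1..d}"] g unfolding Box_def V_def by auto
qed



lemma build:
  fixes tau :: "nat \<Rightarrow> nat \<Rightarrow> nat"
  assumes am: "\<forall>i\<in>{1..d}. \<forall>j<n. a i j < a i (Suc j)"
    and tau_0: "\<forall>i\<in>{1..d}. tau i 0 = 0"
    and tau_mono: "\<forall>i\<in>{1..d}. \<forall>t<l i. tau i t < tau i (Suc t)"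
    and tau_l: "\<forall>i\<in>{1..d}. tau i (l i) = n"
    and T: "\<forall>i\<in>{1..d}. T i \<in> {1..l i}" and g: "good_w d n w"
    and supp: "\<forall>p\<in>gridE d n. w p \<noteq> 0 \<longrightarrow> (\<forall>i\<in>{1..d}. tau i (T i - 1) \<le> p i \<and> p i \<le> tau i (T i))"
  shows "(muof d n a II c w, w, sof d n a w,
          (\<lambda>i t. if i \<in> {1..d} \<and> t \<in> {1..l i - 1} then (if t < T i then 1 else 0) else 0))
         \<in> formulation False d n a tau l II c"
  unfolding form_char
proof (intro conjI)
  note tb = tau_bounds[OF tau_0 tau_mono tau_l]
  show "Inc1 False d n tau l (Zmap a (sof d n a w))
     (\<lambda>i t. if i \<in> {1..d} \<and> t \<in> {1..l i - 1} then if t < T i then 1 else 0 else 0)"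
    unfolding Inc1_char[OF am g]
  proof (intro ballI)
    fix i t assume i: "i \<in> {1..d}" and t: "t \<in> {1..l i - 1}"
    have am': "\<forall>j<n. a i j < a i (Suc j)" using am i by auto
    have tt: "1 \<le> tau i t \<and> tau i t + 1 \<le> n" using tb(1)[OF i t] .
    have Ti: "1 \<le> T i" "T i \<le> l i" using T i by auto
    have Zb: "0 \<le> Zmap a (sof d n a w) i k" "Zmap a (sof d n a w) i k \<le> 1" if "k \<le> n" for k
      using Z_bounds[where a=a and i=i and n=n, OF am' i g that] by auto
    show "(if False then 0 \<le> (if i \<in> {1..d} \<and> t \<in> {1..l i - 1} then if t < T i then 1 else 0 else 0) \<and>
           (if i \<in> {1..d} \<and> t \<in> {1..l i - 1} then if t < T i then 1 else 0 else 0) \<le> 1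
       else (if i \<in> {1..d} \<and> t \<in> {1..l i - 1} then if t < T i then 1 else 0 else 0) \<in> {0, 1}) \<and>
      (if i \<in> {1..d} \<and> t \<in> {1..l i - 1} then if t < T i then 1 else 0 else 0) \<le> Zmap a (sof d n a w) i (tau i t) \<and>
      Zmap a (sof d n a w) i (tau i t + 1) \<le> (if i \<in> {1..d} \<and> t \<in> {1..l i - 1} then if t < T i then 1 else 0 else 0)"
    proof (cases "t < T i")
      case True
      have "(\<Sum>p\<in>gridE d n. w p) = (\<Sum>p\<in>{p\<in>gridE d n. tau i t \<le> p i}. w p)"
      proof (rule sum.mono_neutral_right)
        show "\<forall>p\<in>gridE d n - {p \<in> gridE d n. tau i t \<le> p i}. w p = 0"
        proof (intro ballI, rule ccontr)
          fix p assume p: "p \<in> gridE d n - {p \<in> gridE d n. tau i t \<le> p i}" and "w p \<noteq> 0"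
          then have "tau i (T i - 1) \<le> p i" using supp i by auto
          moreover have "tau i t \<le> tau i (T i - 1)" using tb(4)[OF i, of t "T i - 1"] True Ti by auto
          ultimately show False using p by auto
        qed
      qed (auto simp: gridE_finite)
      then have "Zmap a (sof d n a w) i (tau i t) = 1"
        using tail[where a=a and i=i and n=n, OF am' i, of "tau i t" w] tt g by (simp add: good_w_def)
      then show ?thesis using True i t Zb[of "tau i t + 1"] tt by simp
    next
      case False
      have "(\<Sum>p\<in>{p\<in>gridE d n. tau i t + 1 \<le> p i}. w p) = 0"
      proof (rule sum.neutral, rule ballI, rule ccontr)
        fix p assume p: "p \<in> {p\<in>gridE d n. tau i t + 1 \<le> p i}" and "w p \<noteq> 0"
        then have "p i \<le> tau i (T i)" using supp i by auto
        moreover have "tau i (T i) \<le> tau i t" using tb(4)[OF i, of "T i" t] False t by auto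
        ultimately show False using p by auto
      qed
      then have "Zmap a (sof d n a w) i (tau i t + 1) = 0"
        using tail[where a=a and i=i and n=n, OF am' i, of "tau i t + 1" w] tt by simp
      then show ?thesis using False i t Zb[of "tau i t"] tt by simp
    qed
  qed
qed (auto simp: g dsupp_def)



lemma hull_weights:
  assumes am: "\<forall>i\<in>{1..d}. \<forall>j<n. a i j < a i (Suc j)"
    and II: "II \<subseteq> Pow {1..d}"
    and B: "B \<subseteq> gridE d n"
    and y: "y \<in> convex hull ((\<lambda>p. (apt d a p, mlin II c (apt d a p))) ` B)"
  shows "\<exists>w. good_w d n w \<and> (\<forall>p. w p \<noteq> 0 \<longrightarrow> p \<in> B)
            \<and> ((\<lambda>i. sof d n a w i n), muof d n a II c w) = y"
proof -
  let ?h = "\<lambda>p. (apt d a p, mlin II c (apt d a p))"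
  have fB: "finite B" using B gridE_finite finite_subset by blast
  have inj: "inj_on ?h B"
  proof (rule inj_onI)
    fix p q assume "p \<in> B" "q \<in> B" "?h p = ?h q"
    then show "p = q" using inj_onD[OF apt_inj[OF am]] B by auto
  qed
  obtain w0 where w0: "\<forall>p\<in>B. 0 \<le> w0 p" "sum w0 B = 1" "y = (\<Sum>p\<in>B. w0 p *\<^sub>R ?h p)"
    using hull_rep[OF fB inj y] by blast
  define w where "w = (\<lambda>p. if p \<in> B then w0 p else 0)"
  have GB: "gridE d n \<inter> B = B" using B by auto
  have g: "good_w d n w"
    unfolding good_w_def w_def using B w0
    by (auto simp: sum.inter_restrict[OF gridE_finite, symmetric] GB)
  have "((\<lambda>i. sof d n a w i n), muof d n a II c w) = (\<Sum>p\<in>gridE d n. w p *\<^sub>R ?h p)"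
    by (rule proj_sum[OF II])
  also have "\<dots> = (\<Sum>p\<in>gridE d n. if p \<in> B then w0 p *\<^sub>R ?h p else 0)"
    by (intro sum.cong) (auto simp: w_def zero_prod_def)
  also have "\<dots> = y" using w0(3) by (simp add: sum.inter_restrict[OF gridE_finite, symmetric] GB)
  moreover have "\<forall>p. w p \<noteq> 0 \<longrightarrow> p \<in> B" by (simp add: w_def)
  ultimately show ?thesis using g by blast
qed

lemma proj_supset:
  fixes tau :: "nat \<Rightarrow> nat \<Rightarrow> nat"
  assumes am: "\<forall>i\<in>{1..d}. \<forall>j<n. a i j < a i (Suc j)"
    and tau_0: "\<forall>i\<in>{1..d}. tau i 0 = 0"
    and tau_mono: "\<forall>i\<in>{1..d}. \<forall>t<l i. tau i t < tau i (Suc t)"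
    and tau_l: "\<forall>i\<in>{1..d}. tau i (l i) = n"
    and II: "II \<subseteq> Pow {1..d}"
    and y: "y \<in> target_set d a tau l II c"
  shows "y \<in> (\<lambda>(mu, w, s, delta). ((\<lambda>i. s i n), mu)) ` formulation False d n a tau l II c"
proof -
  note tb = tau_bounds[OF tau_0 tau_mono tau_l]
  obtain t where t: "\<forall>i\<in>{1..d}. t i \<in> {1..l i}"
    and yh: "y \<in> convex hull {(g, mlin II c g) | g. g \<in>
        {g. (\<forall>i\<in>{1..d}. a i (tau i (t i - 1)) \<le> g i \<and> g i \<le> a i (tau i (t i)))
          \<and> (\<forall>i. i \<notin> {1..d} \<longrightarrow> g i = 0)}}"
    using y unfolding target_set_def boxesH_def by blast
  define lo where "lo = (\<lambda>i. tau i (t i - 1))"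
  define hi where "hi = (\<lambda>i. tau i (t i))"
  have lh: "\<forall>i\<in>{1..d}. lo i < hi i \<and> hi i \<le> n"
    using t tb(2,3) by (auto simp: lo_def hi_def)
  define B where "B = {p\<in>gridE d n. \<forall>i\<in>{1..d}. p i = lo i \<or> p i = hi i}"
  have sub: "{(g, mlin II c g) | g. g \<in>
        {g. (\<forall>i\<in>{1..d}. a i (tau i (t i - 1)) \<le> g i \<and> g i \<le> a i (tau i (t i)))
          \<and> (\<forall>i. i \<notin> {1..d} \<longrightarrow> g i = 0)}}
      \<subseteq> convex hull ((\<lambda>p. (apt d a p, mlin II c (apt d a p))) ` B)"
    using vertex_hull[OF am lh II] unfolding B_def lo_def hi_def by blast
  have Bsub: "B \<subseteq> gridE d n" unfolding B_def by blast
  have hy: "y \<in> convex hull ((\<lambda>p. (apt d a p, mlin II c (apt d a p))) ` B)"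
  proof -
    have "convex hull {(g, mlin II c g) | g. g \<in>
        {g. (\<forall>i\<in>{1..d}. a i (tau i (t i - 1)) \<le> g i \<and> g i \<le> a i (tau i (t i)))
          \<and> (\<forall>i. i \<notin> {1..d} \<longrightarrow> g i = 0)}}
      \<subseteq> convex hull ((\<lambda>p. (apt d a p, mlin II c (apt d a p))) ` B)"
      by (rule hull_minimal[OF sub]) (rule convex_convex_hull)
    then show ?thesis using yh by blast
  qed
  obtain w where g: "good_w d n w" and wB: "\<forall>p. w p \<noteq> 0 \<longrightarrow> p \<in> B"
    and py: "((\<lambda>i. sof d n a w i n), muof d n a II c w) = y"
    using hull_weights[OF am II Bsub hy] by blast
  have supp: "\<forall>p\<in>gridE d n. w p \<noteq> 0 \<longrightarrow> (\<forall>i\<in>{1..d}. tau i (t i - 1) \<le> p i \<and> p i \<le> tau i (t i))"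
  proof (intro ballI impI)
    fix p i assume p: "p \<in> gridE d n" "w p \<noteq> 0" and i: "i \<in> {1..d}"
    have "p \<in> B" using wB p by blast
    then have "p i = lo i \<or> p i = hi i" using i unfolding B_def by blast
    moreover have "lo i < hi i" using lh i by blast
    ultimately show "tau i (t i - 1) \<le> p i \<and> p i \<le> tau i (t i)" unfolding lo_def hi_def by auto
  qed
  have "(muof d n a II c w, w, sof d n a w,
          (\<lambda>i t'. if i \<in> {1..d} \<and> t' \<in> {1..l i - 1} then (if t' < t i then 1 else 0) else 0))
         \<in> formulation False d n a tau l II c"
    by (rule build[OF am tau_0 tau_mono tau_l t g supp])
  then show ?thesis using py by (force intro: rev_image_eqI)
qed



lemma graph_in:
  fixes tau :: "nat \<Rightarrow> nat \<Rightarrow> nat" and f :: "'x \<Rightarrow> nat \<Rightarrow> real"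
    and u :: "'x \<Rightarrow> nat \<Rightarrow> nat \<Rightarrow> real" and X :: "'x set"
  assumes n1: "1 \<le> n"
    and am: "\<forall>i\<in>{1..d}. \<forall>j<n. a i j < a i (Suc j)"
    and tau_0: "\<forall>i\<in>{1..d}. tau i 0 = 0"
    and tau_mono: "\<forall>i\<in>{1..d}. \<forall>t<l i. tau i t < tau i (Suc t)"
    and tau_l: "\<forall>i\<in>{1..d}. tau i (l i) = n"
    and II: "II \<subseteq> Pow {1..d}"
    and f_bounds: "\<forall>x\<in>X. \<forall>i\<in>{1..d}. a i 0 \<le> f x i \<and> f x i \<le> a i n"
    and u_0: "\<forall>x\<in>X. \<forall>i\<in>{1..d}. u x i 0 = a i 0"
    and u_n: "\<forall>x\<in>X. \<forall>i\<in>{1..d}. u x i n = f x i"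
    and u_le: "\<forall>x\<in>X. \<forall>i\<in>{1..d}. \<forall>j\<in>{1..n-1}. u x i j \<le> min (f x i) (a i j)"
    and W_graph: "{(x, (\<lambda>i. if i \<in> {1..d} then f x i else 0)) | x. x \<in> X} \<subseteq> W"
    and x: "x \<in> X"
  shows "(x, mlin II c (f x)) \<in> (\<lambda>(x, mu, w, s, delta). (x, mu)) ` ext_formulation False d n a tau l II c X u W"
proof -
  note tb = tau_bounds[OF tau_0 tau_mono tau_l]
  have "\<forall>i\<in>{1..d}. \<exists>j. j \<in> {1..n} \<and> a i (j - 1) \<le> f x i \<and> f x i \<le> a i j"
  proof
    fix i assume i: "i \<in> {1..d}"
    have am': "\<forall>j<n. a i j < a i (Suc j)" using am i by auto
    have fb: "a i 0 \<le> f x i" "f x i \<le> a i n" using f_bounds x i by auto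
    define j0 where "j0 = (LEAST j. f x i \<le> a i j)"
    have j0: "f x i \<le> a i j0" unfolding j0_def by (rule LeastI[of _ n]) (rule fb(2))
    have j0n: "j0 \<le> n" unfolding j0_def by (rule Least_le) (rule fb(2))
    show "\<exists>j. j \<in> {1..n} \<and> a i (j - 1) \<le> f x i \<and> f x i \<le> a i j"
    proof (cases "j0 = 0")
      case True
      have "a i 0 \<le> a i 1" using mono_bounded[where f="a i", OF am', of 0 1] n1 by simp
      then show ?thesis using True j0 fb n1 by (intro exI[of _ 1]) auto
    next
      case False
      have "\<not> f x i \<le> a i (j0 - 1)" using not_less_Least[of "j0 - 1" "\<lambda>j. f x i \<le> a i j"] False
        unfolding j0_def by auto
      then show ?thesis using False j0 j0n by (intro exI[of _ j0]) auto
    qed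
  qed
  then obtain t where t: "\<forall>i\<in>{1..d}. t i \<in> {1..n} \<and> a i (t i - 1) \<le> f x i \<and> f x i \<le> a i (t i)"
    by (metis (no_types, lifting) bchoice)
  define lo where "lo = (\<lambda>i. t i - 1)"
  define hi where "hi = (\<lambda>i. t i)"
  have lh: "\<forall>i\<in>{1..d}. lo i < hi i \<and> hi i \<le> n" using t by (auto simp: lo_def hi_def)
  define g0 where "g0 = (\<lambda>i. if i \<in> {1..d} then f x i else 0)"
  have g0b: "g0 \<in> {g. (\<forall>i\<in>{1..d}. a i (lo i) \<le> g i \<and> g i \<le> a i (hi i)) \<and> (\<forall>i. i \<notin> {1..d} \<longrightarrow> g i = 0)}"
  proof (intro CollectI conjI allI ballI impI)
    fix i assume i: "i \<in> {1..d}"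
    then show "a i (lo i) \<le> g0 i" "g0 i \<le> a i (hi i)" using t unfolding g0_def lo_def hi_def by auto
  next
    fix i :: nat assume "i \<notin> {1..d}" then show "g0 i = 0" unfolding g0_def by auto
  qed
  define B where "B = {p\<in>gridE d n. \<forall>i\<in>{1..d}. p i = lo i \<or> p i = hi i}"
  have Bsub: "B \<subseteq> gridE d n" unfolding B_def by blast
  have hy: "(g0, mlin II c g0) \<in> convex hull ((\<lambda>p. (apt d a p, mlin II c (apt d a p))) ` B)"
    using vertex_hull[OF am lh II g0b] unfolding B_def .
  obtain w where g: "good_w d n w" and wB: "\<forall>p. w p \<noteq> 0 \<longrightarrow> p \<in> B"
    and py: "((\<lambda>i. sof d n a w i n), muof d n a II c w) = (g0, mlin II c g0)"
    using hull_weights[OF am II Bsub hy] by blast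
  define T where "T = (\<lambda>i. LEAST T. t i \<le> tau i T)"
  have TT: "T i \<in> {1..l i} \<and> tau i (T i - 1) \<le> t i - 1 \<and> t i \<le> tau i (T i)" if i: "i \<in> {1..d}" for i
  proof -
    have ex: "t i \<le> tau i (l i)" using t tau_l i by auto
    have a1: "t i \<le> tau i (T i)" unfolding T_def by (rule LeastI[of _ "l i"]) (rule ex)
    have a2: "T i \<le> l i" unfolding T_def by (rule Least_le) (rule ex)
    have a3: "T i \<noteq> 0"
    proof
      assume "T i = 0"
      then have "t i \<le> tau i 0" using a1 by simp
      moreover have "tau i 0 = 0" "1 \<le> t i" using tau_0 t i by auto
      ultimately show False by simp
    qed
    have "\<not> t i \<le> tau i (T i - 1)" using not_less_Least[of "T i - 1" "\<lambda>T. t i \<le> tau i T"] a3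
      unfolding T_def by auto
    then show ?thesis using a1 a2 a3 by auto
  qed
  have Tin: "\<forall>i\<in>{1..d}. T i \<in> {1..l i}" using TT by blast
  have supp: "\<forall>p\<in>gridE d n. w p \<noteq> 0 \<longrightarrow> (\<forall>i\<in>{1..d}. tau i (T i - 1) \<le> p i \<and> p i \<le> tau i (T i))"
  proof (intro ballI impI)
    fix p i assume p: "p \<in> gridE d n" "w p \<noteq> 0" and i: "i \<in> {1..d}"
    have "p i = t i - 1 \<or> p i = t i" using wB p i by (auto simp: B_def lo_def hi_def)
    then show "tau i (T i - 1) \<le> p i \<and> p i \<le> tau i (T i)" using TT[OF i] t i by auto
  qed
  define dl where "dl = (\<lambda>i t'. if i \<in> {1..d} \<and> t' \<in> {1..l i - 1} then (if t' < T i then 1 else 0) else (0::real))"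
  have vin: "(muof d n a II c w, w, sof d n a w, dl) \<in> formulation False d n a tau l II c"
    unfolding dl_def by (rule build[OF am tau_0 tau_mono tau_l Tin g supp])
  have sn: "(\<lambda>i. sof d n a w i n) = g0" using py by simp
  have mu: "muof d n a II c w = mlin II c (f x)"
  proof -
    have "muof d n a II c w = mlin II c g0" using py by simp
    also have "\<dots> = mlin II c (f x)" unfolding mlin_def
    proof (intro sum.cong refl)
      fix I assume "I \<in> II"
      then have "I \<subseteq> {1..d}" using II by auto
      then show "c I * prod g0 I = c I * prod (f x) I" by (auto simp: g0_def intro!: prod.cong)
    qed
    finally show ?thesis .
  qed
  have us: "u x i j \<le> sof d n a w i j" if i: "i \<in> {1..d}" and j: "j \<in> {0..n}" for i j
  proof -
    have ti: "1 \<le> t i" "t i \<le> n" using t i by auto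
    have sj: "sof d n a w i j = (\<Sum>p\<in>gridE d n. a i (min j (p i)) * w p)" using i j by (simp add: sof_def)
    have sn': "(\<Sum>p\<in>gridE d n. a i (min n (p i)) * w p) = f x i"
      using fun_cong[OF sn, of i] i by (simp add: sof_def g0_def)
    have pB: "p i = t i - 1 \<or> p i = t i" if "w p \<noteq> 0" for p
      using wB that i by (auto simp: B_def lo_def hi_def)
    show ?thesis
    proof (cases "j < t i")
      case True
      have "(\<Sum>p\<in>gridE d n. a i (min j (p i)) * w p) = (\<Sum>p\<in>gridE d n. a i j * w p)"
      proof (rule sum.cong[OF refl])
        fix p show "a i (min j (p i)) * w p = a i j * w p"
          using pB[of p] True by (cases "w p = 0") (auto simp: min_def)
      qed
      also have "\<dots> = a i j" using g by (simp add: good_w_def sum_distrib_left[symmetric])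
      finally have s: "sof d n a w i j = a i j" using sj by simp
      show ?thesis
      proof (cases "j = 0")
        case True then show ?thesis using s u_0 x i by simp
      next
        case False
        then have "j \<in> {1..n-1}" using True ti j by auto
        then show ?thesis using s u_le x i by fastforce
      qed
    next
      case False
      have "(\<Sum>p\<in>gridE d n. a i (min j (p i)) * w p) = (\<Sum>p\<in>gridE d n. a i (min n (p i)) * w p)"
      proof (rule sum.cong[OF refl])
        fix p show "a i (min j (p i)) * w p = a i (min n (p i)) * w p"
        proof (cases "w p = 0")
          case True then show ?thesis by simp
        next
          case wp: False
          have "p i \<le> t i" using pB[OF wp] by auto
          then have "min j (p i) = p i" "min n (p i) = p i" using False ti by auto
          then show ?thesis by simp
        qed
      qed
      then have s: "sof d n a w i j = f x i" using sj sn' by simp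
      show ?thesis
      proof (cases "j = n")
        case True then show ?thesis using s u_n x i by simp
      next
        case False
        then have "j \<in> {1..n-1}" using \<open>\<not> j < t i\<close> ti j by auto
        then show ?thesis using s u_le x i by fastforce
      qed
    qed
  qed
  have "(x, muof d n a II c w, w, sof d n a w, dl) \<in> ext_formulation False d n a tau l II c X u W"
    unfolding ext_formulation_def
    using x vin us W_graph sn by (auto simp: g0_def)
  then show ?thesis using mu by (force intro: rev_image_eqI)
qed



lemma lin_le:
  fixes a b c e th :: real
  assumes "a \<le> b" "c \<le> e" "0 \<le> th" "th \<le> 1"
  shows "(1 - th) * a + th * c \<le> (1 - th) * b + th * e"
proof -
  have "(1 - th) * a \<le> (1 - th) * b" using assms by (intro mult_left_mono) auto
  moreover have "th * c \<le> th * e" using assms by (intro mult_left_mono) auto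
  ultimately show ?thesis by linarith
qed

lemma ext_convex:
  fixes X :: "'x::real_vector set" and u :: "'x \<Rightarrow> nat \<Rightarrow> nat \<Rightarrow> real"
  assumes X_convex: "convex X"
    and u_convex: "\<forall>i\<in>{1..d}. \<forall>j\<in>{0..n}. convex_on X (\<lambda>x. u x i j)"
    and W_convex: "convex W"
  shows "convex (ext_formulation True d n a tau l II c X u W)"
  unfolding convex_alt
proof (intro ballI allI impI)
  fix v1 v2 and th :: real
  assume v1: "v1 \<in> ext_formulation True d n a tau l II c X u W"
    and v2: "v2 \<in> ext_formulation True d n a tau l II c X u W" and th: "0 \<le> th \<and> th \<le> 1"
  obtain x1 mu1 w1 s1 d1 where v1e: "v1 = (x1, mu1, w1, s1, d1)" by (cases v1) auto
  obtain x2 mu2 w2 s2 d2 where v2e: "v2 = (x2, mu2, w2, s2, d2)" by (cases v2) auto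
  have x1: "x1 \<in> X" and f1: "(mu1, w1, s1, d1) \<in> formulation True d n a tau l II c"
    and us1: "\<forall>i\<in>{1..d}. \<forall>j\<in>{0..n}. u x1 i j \<le> s1 i j" and W1: "(x1, (\<lambda>i. s1 i n)) \<in> W"
    using v1 v1e by (auto simp: ext_formulation_def)
  have x2: "x2 \<in> X" and f2: "(mu2, w2, s2, d2) \<in> formulation True d n a tau l II c"
    and us2: "\<forall>i\<in>{1..d}. \<forall>j\<in>{0..n}. u x2 i j \<le> s2 i j" and W2: "(x2, (\<lambda>i. s2 i n)) \<in> W"
    using v2 v2e by (auto simp: ext_formulation_def)
  have g1: "good_w d n w1" and mu1: "mu1 = muof d n a II c w1" and s1: "s1 = sof d n a w1"
    and i1: "Inc1 True d n tau l (Zmap a s1) d1" and ds1: "dsupp d l d1"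
    using f1 form_char by blast+
  have g2: "good_w d n w2" and mu2: "mu2 = muof d n a II c w2" and s2: "s2 = sof d n a w2"
    and i2: "Inc1 True d n tau l (Zmap a s2) d2" and ds2: "dsupp d l d2"
    using f2 form_char by blast+
  define x where "x = (1 - th) *\<^sub>R x1 + th *\<^sub>R x2"
  define w where "w = (\<lambda>p. (1 - th) * w1 p + th * w2 p)"
  define s where "s = (1 - th) *\<^sub>R s1 + th *\<^sub>R s2"
  define dd where "dd = (1 - th) *\<^sub>R d1 + th *\<^sub>R d2"
  have wf: "(1 - th) *\<^sub>R w1 + th *\<^sub>R w2 = w" by (simp add: w_def fun_eq_iff scaleR_fun_def)
  have sw: "s = sof d n a w" unfolding s_def w_def s1 s2 by (rule sof_lin[symmetric])
  have mw: "(1 - th) * mu1 + th * mu2 = muof d n a II c w" unfolding w_def mu1 mu2 by (rule muof_lin[symmetric])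
  have gw: "good_w d n w"
  proof -
    have "(\<Sum>p\<in>gridE d n. w p) = (1 - th) * (\<Sum>p\<in>gridE d n. w1 p) + th * (\<Sum>p\<in>gridE d n. w2 p)"
      by (simp add: w_def sum.distrib sum_distrib_left)
    then show ?thesis using g1 g2 th by (auto simp: good_w_def w_def)
  qed
  have Zs: "Zmap a s i k = (1 - th) * Zmap a s1 i k + th * Zmap a s2 i k" for i k
    unfolding s_def by (rule Zmap_lin) simp
  have dd': "dd i t = (1 - th) * d1 i t + th * d2 i t" for i t by (simp add: dd_def scaleR_fun_def)
  have inc: "Inc1 True d n tau l (Zmap a s) dd"
    unfolding Inc1_def
  proof (rule ballI)
    fix i assume i: "i \<in> {1..d}"
    have A1: "Zmap a s1 i 0 = 1 \<and> (\<forall>j\<in>{1..n}. Zmap a s1 i j \<le> Zmap a s1 i (j - 1)) \<and> 0 \<le> Zmap a s1 i n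
        \<and> (\<forall>t\<in>{1..l i - 1}. (0 \<le> d1 i t \<and> d1 i t \<le> 1) \<and> d1 i t \<le> Zmap a s1 i (tau i t) \<and> Zmap a s1 i (tau i t + 1) \<le> d1 i t)"
      using i1 i unfolding Inc1_def by simp
    have A2: "Zmap a s2 i 0 = 1 \<and> (\<forall>j\<in>{1..n}. Zmap a s2 i j \<le> Zmap a s2 i (j - 1)) \<and> 0 \<le> Zmap a s2 i n
        \<and> (\<forall>t\<in>{1..l i - 1}. (0 \<le> d2 i t \<and> d2 i t \<le> 1) \<and> d2 i t \<le> Zmap a s2 i (tau i t) \<and> Zmap a s2 i (tau i t + 1) \<le> d2 i t)"
      using i2 i unfolding Inc1_def by simp
    have Z0: "Zmap a s i 0 = 1" using A1 A2 by (simp add: Zs)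
    have Zm: "\<forall>j\<in>{1..n}. Zmap a s i j \<le> Zmap a s i (j - 1)"
      using A1 A2 th by (auto simp: Zs intro!: lin_le)
    have Zn: "0 \<le> Zmap a s i n" using lin_le[of 0 "Zmap a s1 i n" 0 "Zmap a s2 i n" th] A1 A2 th by (simp add: Zs)
    have Zt: "\<forall>t\<in>{1..l i - 1}. (if True then 0 \<le> dd i t \<and> dd i t \<le> 1 else dd i t \<in> {0, 1}) \<and>
          dd i t \<le> Zmap a s i (tau i t) \<and> Zmap a s i (tau i t + 1) \<le> dd i t"
    proof (intro ballI)
      fix t assume t: "t \<in> {1..l i - 1}"
      have "0 \<le> dd i t" using lin_le[of 0 "d1 i t" 0 "d2 i t" th] A1 A2 th t by (simp add: dd')
      moreover have "dd i t \<le> 1" using lin_le[of "d1 i t" 1 "d2 i t" 1 th] A1 A2 th t by (simp add: dd')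
      moreover have "dd i t \<le> Zmap a s i (tau i t)"
        using lin_le[of "d1 i t" "Zmap a s1 i (tau i t)" "d2 i t" "Zmap a s2 i (tau i t)" th] A1 A2 th t
        by (simp add: dd' Zs)
      moreover have "Zmap a s i (tau i t + 1) \<le> dd i t"
        using lin_le[of "Zmap a s1 i (tau i t + 1)" "d1 i t" "Zmap a s2 i (tau i t + 1)" "d2 i t" th] A1 A2 th t
        by (simp add: dd' Zs)
      ultimately show "(if True then 0 \<le> dd i t \<and> dd i t \<le> 1 else dd i t \<in> {0, 1}) \<and>
          dd i t \<le> Zmap a s i (tau i t) \<and> Zmap a s i (tau i t + 1) \<le> dd i t" by simp
    qed
    show "Zmap a s i 0 = 1 \<and> (\<forall>j\<in>{1..n}. Zmap a s i j \<le> Zmap a s i (j - 1)) \<and> 0 \<le> Zmap a s i n \<and>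
      (\<forall>t\<in>{1..l i - 1}. (if True then 0 \<le> dd i t \<and> dd i t \<le> 1 else dd i t \<in> {0, 1}) \<and>
          dd i t \<le> Zmap a s i (tau i t) \<and> Zmap a s i (tau i t + 1) \<le> dd i t)"
      using Z0 Zm Zn Zt by blast
  qed
  have dsd: "dsupp d l dd" using ds1 ds2 by (simp add: dsupp_def dd')
  have fin: "((1 - th) * mu1 + th * mu2, w, s, dd) \<in> formulation True d n a tau l II c"
    unfolding form_char using gw mw sw inc dsd by simp
  have xX: "x \<in> X" using X_convex x1 x2 th unfolding convex_alt x_def by blast
  have usx: "\<forall>i\<in>{1..d}. \<forall>j\<in>{0..n}. u x i j \<le> s i j"
  proof (intro ballI)
    fix i j assume i: "i \<in> {1..d}" and j: "j \<in> {0..n}"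
    have "u x i j \<le> (1 - th) * u x1 i j + th * u x2 i j"
      unfolding x_def using convex_onD[OF bspec[OF bspec[OF u_convex i] j]] th x1 x2 by blast
    also have "\<dots> \<le> (1 - th) * s1 i j + th * s2 i j" using lin_le us1 us2 i j th by blast
    finally show "u x i j \<le> s i j" by (simp add: s_def scaleR_fun_def)
  qed
  have Wx: "(x, (\<lambda>i. s i n)) \<in> W"
  proof -
    have "(1 - th) *\<^sub>R (x1, (\<lambda>i. s1 i n)) + th *\<^sub>R (x2, (\<lambda>i. s2 i n)) \<in> W"
      using W_convex W1 W2 th unfolding convex_alt by blast
    moreover have "(1 - th) *\<^sub>R (x1, (\<lambda>i. s1 i n)) + th *\<^sub>R (x2, (\<lambda>i. s2 i n)) = (x, (\<lambda>i. s i n))"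
      by (simp add: x_def s_def scaleR_fun_def fun_eq_iff)
    ultimately show ?thesis by simp
  qed
  have "(1 - th) *\<^sub>R v1 + th *\<^sub>R v2 = (x, (1 - th) * mu1 + th * mu2, w, s, dd)"
    using wf by (simp add: v1e v2e x_def s_def dd_def)
  then show "(1 - th) *\<^sub>R v1 + th *\<^sub>R v2 \<in> ext_formulation True d n a tau l II c X u W"
    unfolding ext_formulation_def using xX fin usx Wx by simp
qed


theorem corollary4p7:
  fixes d n :: nat
    and a :: "nat \<Rightarrow> nat \<Rightarrow> real"
    and tau :: "nat \<Rightarrow> nat \<Rightarrow> nat" and l :: "nat \<Rightarrow> nat"
    and II :: "nat set set" and c :: "nat set \<Rightarrow> real"
    and X :: "'x::euclidean_space set"
    and f :: "'x \<Rightarrow> nat \<Rightarrow> real"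
    and u :: "'x \<Rightarrow> nat \<Rightarrow> nat \<Rightarrow> real"
    and W :: "('x \<times> (nat \<Rightarrow> real)) set"
  assumes "1 \<le> d" and "1 \<le> n"
    and a_mono: "\<forall>i\<in>{1..d}. \<forall>j<n. a i j < a i (Suc j)"
    and tau_0: "\<forall>i\<in>{1..d}. tau i 0 = 0"
    and tau_mono: "\<forall>i\<in>{1..d}. \<forall>t<l i. tau i t < tau i (Suc t)"
    and tau_l: "\<forall>i\<in>{1..d}. tau i (l i) = n"
    and II_sub: "II \<subseteq> Pow {1..d}"
    and f_bounds: "\<forall>x\<in>X. \<forall>i\<in>{1..d}. a i 0 \<le> f x i \<and> f x i \<le> a i n"
    and X_convex: "convex X"
    and u_convex: "\<forall>i\<in>{1..d}. \<forall>j\<in>{0..n}. convex_on X (\<lambda>x. u x i j)"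
    and u_0: "\<forall>x\<in>X. \<forall>i\<in>{1..d}. u x i 0 = a i 0"
    and u_n: "\<forall>x\<in>X. \<forall>i\<in>{1..d}. u x i n = f x i"
    and u_le: "\<forall>x\<in>X. \<forall>i\<in>{1..d}. \<forall>j\<in>{1..n-1}. u x i j \<le> min (f x i) (a i j)"
    and W_convex: "convex W"
    and W_graph: "{(x, (\<lambda>i. if i \<in> {1..d} then f x i else 0)) | x. x \<in> X} \<subseteq> W"
  shows "ideal_formulation
           (formulation False d n a tau l II c) (formulation True d n a tau l II c)
           (\<lambda>(mu, w, s, delta). ((\<lambda>i. s i n), mu))
           (\<lambda>(mu, w, s, delta). delta_binary d l delta)
           (target_set d a tau l II c)
       \<and> micp_relaxation
           (ext_formulation False d n a tau l II c X u W) (ext_formulation True d n a tau l II c X u W)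
           (\<lambda>(x, mu, w, s, delta). (x, mu))
           {(x, mlin II c (f x)) | x. x \<in> X}"
  proof -
  note tb = tau_bounds[OF tau_0 tau_mono tau_l]
  have tb1: "\<forall>i\<in>{1..d}. \<forall>t\<in>{1..l i - 1}. 1 \<le> tau i t \<and> tau i t + 1 \<le> n"
    using tb(1) by blast
  have P1: "(\<lambda>(mu, w, s, delta). ((\<lambda>i. s i n), mu)) ` formulation False d n a tau l II c
      = target_set d a tau l II c"
  proof
    show "(\<lambda>(mu, w, s, delta). ((\<lambda>i. s i n), mu)) ` formulation False d n a tau l II c
      \<subseteq> target_set d a tau l II c"
    proof
      fix y assume "y \<in> (\<lambda>(mu, w, s, delta). ((\<lambda>i. s i n), mu)) ` formulation False d n a tau l II c"
      then obtain mu w s delta where v: "(mu, w, s, delta) \<in> formulation False d n a tau l II c"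
        and y: "y = ((\<lambda>i. s i n), mu)" by auto
      show "y \<in> target_set d a tau l II c"
        unfolding y by (rule proj_subset[OF assms(2) a_mono tau_0 tau_mono tau_l II_sub v])
    qed
    show "target_set d a tau l II c
      \<subseteq> (\<lambda>(mu, w, s, delta). ((\<lambda>i. s i n), mu)) ` formulation False d n a tau l II c"
      using proj_supset[OF a_mono tau_0 tau_mono tau_l II_sub] by blast
  qed
  have P2: "\<forall>v. v extreme_point_of formulation True d n a tau l II c
      \<longrightarrow> (\<lambda>(mu, w, s, delta). delta_binary d l delta) v"
    using extreme_binary[OF a_mono tb1] by blast
  have P3: "{(x, mlin II c (f x)) | x. x \<in> X}
      \<subseteq> (\<lambda>(x, mu, w, s, delta). (x, mu)) ` ext_formulation False d n a tau l II c X u W"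
    using graph_in[OF assms(2) a_mono tau_0 tau_mono tau_l II_sub f_bounds u_0 u_n u_le W_graph] by blast
  have P4: "convex (ext_formulation True d n a tau l II c X u W)"
    by (rule ext_convex[OF X_convex u_convex W_convex])
  show ?thesis unfolding ideal_formulation_def micp_relaxation_def using P1 P2 P3 P4 by blast
qed

end
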